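(* Let $T=(T,\mu,\iota)$ be a normal lax double monad on an equipment $\mathcal K$. If the vertical morphism $g\colon C\to A$ has a left adjoint in the vertical $2$-category $V(\mathcal K)$, then the cell $\iota_{g^*}$ (where $g^*\colon A\nrightarrow C$ is the conjoint of $g$) satisfies the right Beck–Chevalley condition.
   Context: Double categories: a double category has objects, vertical morphisms (composition $\circ$), horizontal morphisms $J\colon A\nrightarrow B$ (composition $\odot$ in diagrammatic order, units $1_A$, weakly associative/unital) and cells with horizontal source $J\colon A\nrightarrow B$, horizontal target $K\colon C\nrightarrow D$, vertical sides $f\colon A\to C$, $g\colon B\to D$. Vertical cells (units as horizontal source and target) form, with objects and vertical morphisms, the $2$-category $V(\mathcal K)$. A cell $\phi\colon J\Rightarrow K$ with sides $f,g$ is cartesian if every cell $H\Rightarrow K$ with sides $f\circ h,g\circ k$ factors uniquely through $\phi$ via a cell $H\Rightarrow J$ with sides $h,k$; opcartesian dually. The companion of $f\colon A\to C$ is $f_*=1_C(f,\mathrm{id})\colon A\nrightarrow C$ (given by a cartesian cell $f_*\Rightarrow 1_C$ with sides $f,\mathrm{id}_C$, equivalently an opcartesian cell $1_A\Rightarrow f_*$ with sides $\mathrm{id}_A,f$); the conjoint of $g\colon C\to A$ is $g^*=1_A(\mathrm{id},g)\colon A\nrightarrow C$. An equipment has all companions and conjoints. A normal lax double monad $(T,\mu,\iota)$ on $\mathcal K$: a lax double functor $T\colon\mathcal K\to\mathcal K$ preserving vertical structure and horizontal units strictly and horizontal composition up to coherent compositor cells, with double transformations $\mu\colon T^2\Rightarrow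 T$, $\iota\colon\mathrm{id}\Rightarrow T$ satisfying the monad axioms; $\iota$ consists of vertical morphisms $\iota_A\colon A\to TA$ and cells $\iota_J\colon J\Rightarrow TJ$ with sides $\iota_A,\iota_B$, natural and compatible with compositors, $\iota_{1_A}=1_{\iota_A}$. Right Beck–Chevalley condition: for $J\colon A\nrightarrow B$ let $\iota_{J*}\colon J\odot\iota_{B*}\Rightarrow\iota_{A*}\odot TJ$ be the horizontal composite of the opcartesian cell $1_A\Rightarrow\iota_{A*}$ (sides $\mathrm{id}_A,\iota_A$), $\iota_J$, and the cartesian cell $\iota_{B*}\Rightarrow 1_{TB}$ (sides $\iota_B,\mathrm{id}_{TB}$); $\iota_J$ satisfies the right Beck–Chevalley condition if $\iota_{J*}$ is invertible. *)

theory Defs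
  imports Main
begin

text \<open>A double category is given by sets of objects, vertical morphisms, horizontal
morphisms and cells together with (total functions representing) the partial
operations.  Conventions:
  vcmp D g f  = g o f  (vertical composition of vertical morphisms, f first);
  hcmp D J K  = J (.) K in diagrammatic order (J : A -/-> B, K : B -/-> C);
  a cell phi has horizontal source csrc phi, horizontal target ctgt phi,
  left vertical side cleft phi and right vertical side cright phi;
  cvcmp D psi phi = psi after phi (vertical composition of cells);
  chcmp D phi psi = phi (.) psi (horizontal composition of cells, diagrammatic);
  cunit D f = the horizontal unit cell 1_f : 1_A => 1_C on f : A -> C;
  hassoc J K L : (J.K).L => J.(K.L),  hlunit J : 1_A . J => J,
  hrunit J : J . 1_B => J  (globular, invertible, natural, coherent).\<close>

record ('o,'v,'h,'c) dblcat =
  Ob :: "'o set"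
  Ver :: "'v set"
  vdom :: "'v \<Rightarrow> 'o"
  vcod :: "'v \<Rightarrow> 'o"
  vcmp :: "'v \<Rightarrow> 'v \<Rightarrow> 'v"
  vid :: "'o \<Rightarrow> 'v"
  Hor :: "'h set"
  hsrc :: "'h \<Rightarrow> 'o"
  htgt :: "'h \<Rightarrow> 'o"
  hcmp :: "'h \<Rightarrow> 'h \<Rightarrow> 'h"
  hunit :: "'o \<Rightarrow> 'h"
  Cel :: "'c set"
  csrc :: "'c \<Rightarrow> 'h"
  ctgt :: "'c \<Rightarrow> 'h"
  cleft :: "'c \<Rightarrow> 'v"
  cright :: "'c \<Rightarrow> 'v"
  cvcmp :: "'c \<Rightarrow> 'c \<Rightarrow> 'c"
  cvid :: "'h \<Rightarrow> 'c"
  chcmp :: "'c \<Rightarrow> 'c \<Rightarrow> 'c"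
  cunit :: "'v \<Rightarrow> 'c"
  hassoc :: "'h \<Rightarrow> 'h \<Rightarrow> 'h \<Rightarrow> 'c"
  hlunit :: "'h \<Rightarrow> 'c"
  hrunit :: "'h \<Rightarrow> 'c"

definition is_cell :: "('o,'v,'h,'c,'x) dblcat_scheme \<Rightarrow> 'c \<Rightarrow> 'h \<Rightarrow> 'h \<Rightarrow> 'v \<Rightarrow> 'v \<Rightarrow> bool" where
  "is_cell D \<phi> J K f g \<longleftrightarrow> \<phi> \<in> Cel D \<and> csrc D \<phi> = J \<and> ctgt D \<phi> = K \<and> cleft D \<phi> = f \<and> cright D \<phi> = g"

definition cell_invertible :: "('o,'v,'h,'c,'x) dblcat_scheme \<Rightarrow> 'c \<Rightarrow> bool" where
  "cell_invertible D \<phi> \<longleftrightarrow> \<phi> \<in> Cel D \<and> (\<exists>\<psi>\<in>Cel D. csrc D \<psi> = ctgt D \<phi> \<and> ctgt D \<psi> = csrc D \<phi> \<and>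
      cvcmp D \<psi> \<phi> = cvid D (csrc D \<phi>) \<and> cvcmp D \<phi> \<psi> = cvid D (ctgt D \<phi>))"

definition cinv :: "('o,'v,'h,'c,'x) dblcat_scheme \<Rightarrow> 'c \<Rightarrow> 'c" where
  "cinv D \<phi> = (SOME \<psi>. \<psi> \<in> Cel D \<and> csrc D \<psi> = ctgt D \<phi> \<and> ctgt D \<psi> = csrc D \<phi> \<and>
      cvcmp D \<psi> \<phi> = cvid D (csrc D \<phi>) \<and> cvcmp D \<phi> \<psi> = cvid D (ctgt D \<phi>))"

definition vertical_category_axioms :: "('o,'v,'h,'c,'x) dblcat_scheme \<Rightarrow> bool" where
  "vertical_category_axioms D \<longleftrightarrow>
    (\<forall>A\<in>Ob D. vid D A \<in> Ver D \<and> vdom D (vid D A) = A \<and> vcod D (vid D A) = A) \<and>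
    (\<forall>f\<in>Ver D. vdom D f \<in> Ob D \<and> vcod D f \<in> Ob D) \<and>
    (\<forall>f\<in>Ver D. \<forall>g\<in>Ver D. vcod D f = vdom D g \<longrightarrow>
        vcmp D g f \<in> Ver D \<and> vdom D (vcmp D g f) = vdom D f \<and> vcod D (vcmp D g f) = vcod D g) \<and>
    (\<forall>f\<in>Ver D. vcmp D f (vid D (vdom D f)) = f \<and> vcmp D (vid D (vcod D f)) f = f) \<and>
    (\<forall>f\<in>Ver D. \<forall>g\<in>Ver D. \<forall>h\<in>Ver D. vcod D f = vdom D g \<longrightarrow> vcod D g = vdom D h \<longrightarrow>
        vcmp D h (vcmp D g f) = vcmp D (vcmp D h g) f)"

definition horizontal_data_axioms :: "('o,'v,'h,'c,'x) dblcat_scheme \<Rightarrow> bool" where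
  "horizontal_data_axioms D \<longleftrightarrow>
    (\<forall>J\<in>Hor D. hsrc D J \<in> Ob D \<and> htgt D J \<in> Ob D) \<and>
    (\<forall>A\<in>Ob D. hunit D A \<in> Hor D \<and> hsrc D (hunit D A) = A \<and> htgt D (hunit D A) = A) \<and>
    (\<forall>J\<in>Hor D. \<forall>K\<in>Hor D. htgt D J = hsrc D K \<longrightarrow>
        hcmp D J K \<in> Hor D \<and> hsrc D (hcmp D J K) = hsrc D J \<and> htgt D (hcmp D J K) = htgt D K)"

definition cell_axioms :: "('o,'v,'h,'c,'x) dblcat_scheme \<Rightarrow> bool" where
  "cell_axioms D \<longleftrightarrow>
    \<comment> \<open>boundaries of cells\<close>
    (\<forall>\<phi>\<in>Cel D. csrc D \<phi> \<in> Hor D \<and> ctgt D \<phi> \<in> Hor D \<and> cleft D \<phi> \<in> Ver D \<and> cright D \<phi> \<in> Ver D \<and>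
        vdom D (cleft D \<phi>) = hsrc D (csrc D \<phi>) \<and> vcod D (cleft D \<phi>) = hsrc D (ctgt D \<phi>) \<and>
        vdom D (cright D \<phi>) = htgt D (csrc D \<phi>) \<and> vcod D (cright D \<phi>) = htgt D (ctgt D \<phi>)) \<and>
    \<comment> \<open>vertical composition of cells\<close>
    (\<forall>\<phi>\<in>Cel D. \<forall>\<psi>\<in>Cel D. ctgt D \<phi> = csrc D \<psi> \<longrightarrow>
        is_cell D (cvcmp D \<psi> \<phi>) (csrc D \<phi>) (ctgt D \<psi>)
          (vcmp D (cleft D \<psi>) (cleft D \<phi>)) (vcmp D (cright D \<psi>) (cright D \<phi>))) \<and>
    (\<forall>J\<in>Hor D. is_cell D (cvid D J) J J (vid D (hsrc D J)) (vid D (htgt D J))) \<and>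
    (\<forall>\<phi>\<in>Cel D. cvcmp D \<phi> (cvid D (csrc D \<phi>)) = \<phi> \<and> cvcmp D (cvid D (ctgt D \<phi>)) \<phi> = \<phi>) \<and>
    (\<forall>\<phi>\<in>Cel D. \<forall>\<psi>\<in>Cel D. \<forall>\<chi>\<in>Cel D. ctgt D \<phi> = csrc D \<psi> \<longrightarrow> ctgt D \<psi> = csrc D \<chi> \<longrightarrow>
        cvcmp D \<chi> (cvcmp D \<psi> \<phi>) = cvcmp D (cvcmp D \<chi> \<psi>) \<phi>) \<and>
    \<comment> \<open>horizontal composition of cells and unit cells\<close>
    (\<forall>\<phi>\<in>Cel D. \<forall>\<psi>\<in>Cel D. cright D \<phi> = cleft D \<psi> \<longrightarrow>
        is_cell D (chcmp D \<phi> \<psi>) (hcmp D (csrc D \<phi>) (csrc D \<psi>)) (hcmp D (ctgt D \<phi>) (ctgt D \<psi>))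
          (cleft D \<phi>) (cright D \<psi>)) \<and>
    (\<forall>f\<in>Ver D. is_cell D (cunit D f) (hunit D (vdom D f)) (hunit D (vcod D f)) f f) \<and>
    \<comment> \<open>functoriality of horizontal composition and of units (interchange)\<close>
    (\<forall>\<phi>\<in>Cel D. \<forall>\<psi>\<in>Cel D. \<forall>\<phi>'\<in>Cel D. \<forall>\<psi>'\<in>Cel D.
        ctgt D \<phi> = csrc D \<psi> \<longrightarrow> ctgt D \<phi>' = csrc D \<psi>' \<longrightarrow>
        cright D \<phi> = cleft D \<phi>' \<longrightarrow> cright D \<psi> = cleft D \<psi>' \<longrightarrow>
        chcmp D (cvcmp D \<psi> \<phi>) (cvcmp D \<psi>' \<phi>') = cvcmp D (chcmp D \<psi> \<psi>') (chcmp D \<phi> \<phi>')) \<and>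
    (\<forall>J\<in>Hor D. \<forall>K\<in>Hor D. htgt D J = hsrc D K \<longrightarrow>
        chcmp D (cvid D J) (cvid D K) = cvid D (hcmp D J K)) \<and>
    (\<forall>f\<in>Ver D. \<forall>g\<in>Ver D. vcod D f = vdom D g \<longrightarrow>
        cunit D (vcmp D g f) = cvcmp D (cunit D g) (cunit D f)) \<and>
    (\<forall>A\<in>Ob D. cunit D (vid D A) = cvid D (hunit D A))"

definition coherence_axioms :: "('o,'v,'h,'c,'x) dblcat_scheme \<Rightarrow> bool" where
  "coherence_axioms D \<longleftrightarrow>
    \<comment> \<open>associator: globular, invertible, natural\<close>
    (\<forall>J\<in>Hor D. \<forall>K\<in>Hor D. \<forall>L\<in>Hor D. htgt D J = hsrc D K \<longrightarrow> htgt D K = hsrc D L \<longrightarrow>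
        is_cell D (hassoc D J K L) (hcmp D (hcmp D J K) L) (hcmp D J (hcmp D K L))
          (vid D (hsrc D J)) (vid D (htgt D L)) \<and> cell_invertible D (hassoc D J K L)) \<and>
    (\<forall>\<phi>\<in>Cel D. \<forall>\<psi>\<in>Cel D. \<forall>\<chi>\<in>Cel D. cright D \<phi> = cleft D \<psi> \<longrightarrow> cright D \<psi> = cleft D \<chi> \<longrightarrow>
        cvcmp D (hassoc D (ctgt D \<phi>) (ctgt D \<psi>) (ctgt D \<chi>)) (chcmp D (chcmp D \<phi> \<psi>) \<chi>)
        = cvcmp D (chcmp D \<phi> (chcmp D \<psi> \<chi>)) (hassoc D (csrc D \<phi>) (csrc D \<psi>) (csrc D \<chi>))) \<and>
    \<comment> \<open>unitors: globular, invertible, natural\<close>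
    (\<forall>J\<in>Hor D. is_cell D (hlunit D J) (hcmp D (hunit D (hsrc D J)) J) J (vid D (hsrc D J)) (vid D (htgt D J))
        \<and> cell_invertible D (hlunit D J)) \<and>
    (\<forall>J\<in>Hor D. is_cell D (hrunit D J) (hcmp D J (hunit D (htgt D J))) J (vid D (hsrc D J)) (vid D (htgt D J))
        \<and> cell_invertible D (hrunit D J)) \<and>
    (\<forall>\<phi>\<in>Cel D. cvcmp D (hlunit D (ctgt D \<phi>)) (chcmp D (cunit D (cleft D \<phi>)) \<phi>)
        = cvcmp D \<phi> (hlunit D (csrc D \<phi>))) \<and>
    (\<forall>\<phi>\<in>Cel D. cvcmp D (hrunit D (ctgt D \<phi>)) (chcmp D \<phi> (cunit D (cright D \<phi>)))
        = cvcmp D \<phi> (hrunit D (csrc D \<phi>))) \<and>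
    \<comment> \<open>pentagon\<close>
    (\<forall>J\<in>Hor D. \<forall>K\<in>Hor D. \<forall>L\<in>Hor D. \<forall>M\<in>Hor D.
        htgt D J = hsrc D K \<longrightarrow> htgt D K = hsrc D L \<longrightarrow> htgt D L = hsrc D M \<longrightarrow>
        cvcmp D (hassoc D J K (hcmp D L M)) (hassoc D (hcmp D J K) L M)
        = cvcmp D (chcmp D (cvid D J) (hassoc D K L M))
            (cvcmp D (hassoc D J (hcmp D K L) M) (chcmp D (hassoc D J K L) (cvid D M)))) \<and>
    \<comment> \<open>triangle\<close>
    (\<forall>J\<in>Hor D. \<forall>K\<in>Hor D. htgt D J = hsrc D K \<longrightarrow>
        cvcmp D (chcmp D (cvid D J) (hlunit D K)) (hassoc D J (hunit D (htgt D J)) K)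
        = chcmp D (hrunit D J) (cvid D K))"

definition double_category :: "('o,'v,'h,'c,'x) dblcat_scheme \<Rightarrow> bool" where
  "double_category D \<longleftrightarrow> vertical_category_axioms D \<and> horizontal_data_axioms D \<and>
     cell_axioms D \<and> coherence_axioms D"

definition cartesian :: "('o,'v,'h,'c,'x) dblcat_scheme \<Rightarrow> 'c \<Rightarrow> bool" where
  "cartesian D \<phi> \<longleftrightarrow> \<phi> \<in> Cel D \<and>
    (\<forall>\<psi>\<in>Cel D. \<forall>h\<in>Ver D. \<forall>k\<in>Ver D.
       vcod D h = vdom D (cleft D \<phi>) \<longrightarrow> vcod D k = vdom D (cright D \<phi>) \<longrightarrow>
       ctgt D \<psi> = ctgt D \<phi> \<longrightarrow> cleft D \<psi> = vcmp D (cleft D \<phi>) h \<longrightarrow> cright D \<psi> = vcmp D (cright D \<phi>) k \<longrightarrow>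
       (\<exists>!\<chi>. is_cell D \<chi> (csrc D \<psi>) (csrc D \<phi>) h k \<and> cvcmp D \<phi> \<chi> = \<psi>))"

definition opcartesian :: "('o,'v,'h,'c,'x) dblcat_scheme \<Rightarrow> 'c \<Rightarrow> bool" where
  "opcartesian D \<phi> \<longleftrightarrow> \<phi> \<in> Cel D \<and>
    (\<forall>\<psi>\<in>Cel D. \<forall>h\<in>Ver D. \<forall>k\<in>Ver D.
       vdom D h = vcod D (cleft D \<phi>) \<longrightarrow> vdom D k = vcod D (cright D \<phi>) \<longrightarrow>
       csrc D \<psi> = csrc D \<phi> \<longrightarrow> cleft D \<psi> = vcmp D h (cleft D \<phi>) \<longrightarrow> cright D \<psi> = vcmp D k (cright D \<phi>) \<longrightarrow>
       (\<exists>!\<chi>. is_cell D \<chi> (ctgt D \<phi>) (ctgt D \<psi>) h k \<and> cvcmp D \<chi> \<phi> = \<psi>))"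

definition companion_cart :: "('o,'v,'h,'c,'x) dblcat_scheme \<Rightarrow> 'v \<Rightarrow> 'h \<Rightarrow> 'c \<Rightarrow> bool" where
  "companion_cart D f K \<chi> \<longleftrightarrow> f \<in> Ver D \<and> K \<in> Hor D \<and>
     is_cell D \<chi> K (hunit D (vcod D f)) f (vid D (vcod D f)) \<and> cartesian D \<chi>"

definition companion_opcart :: "('o,'v,'h,'c,'x) dblcat_scheme \<Rightarrow> 'v \<Rightarrow> 'h \<Rightarrow> 'c \<Rightarrow> bool" where
  "companion_opcart D f K \<eta> \<longleftrightarrow> f \<in> Ver D \<and> K \<in> Hor D \<and>
     is_cell D \<eta> (hunit D (vdom D f)) K (vid D (vdom D f)) f \<and> opcartesian D \<eta>"

text \<open>K is a conjoint g^* = 1_A(id, g) : A -/-> C of g : C -> A, witnessed by a cartesian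
  cell K => 1_A with sides id_A, g.\<close>
definition conjoint_cart :: "('o,'v,'h,'c,'x) dblcat_scheme \<Rightarrow> 'v \<Rightarrow> 'h \<Rightarrow> 'c \<Rightarrow> bool" where
  "conjoint_cart D g K \<chi> \<longleftrightarrow> g \<in> Ver D \<and> K \<in> Hor D \<and>
     is_cell D \<chi> K (hunit D (vcod D g)) (vid D (vcod D g)) g \<and> cartesian D \<chi>"

definition equipment :: "('o,'v,'h,'c,'x) dblcat_scheme \<Rightarrow> bool" where
  "equipment D \<longleftrightarrow> double_category D \<and>
     (\<forall>f\<in>Ver D. (\<exists>K \<chi>. companion_cart D f K \<chi>) \<and> (\<exists>K \<chi>. conjoint_cart D f K \<chi>))"

section \<open>The vertical 2-category V(K) and adjunctions in it\<close>

text \<open>A 2-cell h => k (h, k : X -> Y) of V(K) is a cell 1_X => 1_Y with left side h, right side k.\<close>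
definition vcell :: "('o,'v,'h,'c,'x) dblcat_scheme \<Rightarrow> 'c \<Rightarrow> 'v \<Rightarrow> 'v \<Rightarrow> bool" where
  "vcell D \<alpha> h k \<longleftrightarrow> is_cell D \<alpha> (hunit D (vdom D h)) (hunit D (vcod D h)) h k"

text \<open>Composition (alpha then beta) of 2-cells in V(K): horizontal composite conjugated by unitors.\<close>
definition v2comp :: "('o,'v,'h,'c,'x) dblcat_scheme \<Rightarrow> 'c \<Rightarrow> 'c \<Rightarrow> 'c" where
  "v2comp D \<beta> \<alpha> = cvcmp D (hlunit D (hunit D (vcod D (cleft D \<alpha>))))
      (cvcmp D (chcmp D \<alpha> \<beta>) (cinv D (hlunit D (hunit D (vdom D (cleft D \<alpha>))))))"

text \<open>f -| g in V(K), for f : A -> C and g : C -> A; whiskering is vertical composition with unit cells.\<close>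
definition vadjunction :: "('o,'v,'h,'c,'x) dblcat_scheme \<Rightarrow> 'v \<Rightarrow> 'v \<Rightarrow> bool" where
  "vadjunction D f g \<longleftrightarrow> f \<in> Ver D \<and> g \<in> Ver D \<and> vdom D f = vcod D g \<and> vcod D f = vdom D g \<and>
     (\<exists>\<eta> \<epsilon>. vcell D \<eta> (vid D (vdom D f)) (vcmp D g f) \<and> vcell D \<epsilon> (vcmp D f g) (vid D (vcod D f)) \<and>
        v2comp D (cvcmp D \<epsilon> (cunit D f)) (cvcmp D (cunit D f) \<eta>) = cunit D f \<and>
        v2comp D (cvcmp D (cunit D g) \<epsilon>) (cvcmp D \<eta> (cunit D g)) = cunit D g)"

definition has_left_adjoint :: "('o,'v,'h,'c,'x) dblcat_scheme \<Rightarrow> 'v \<Rightarrow> bool" where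
  "has_left_adjoint D g \<longleftrightarrow> (\<exists>f. vadjunction D f g)"

record ('o,'v,'h,'c) dfun =
  fo :: "'o \<Rightarrow> 'o"
  fv :: "'v \<Rightarrow> 'v"
  fh :: "'h \<Rightarrow> 'h"
  fc :: "'c \<Rightarrow> 'c"
  fcmp :: "'h \<Rightarrow> 'h \<Rightarrow> 'c"

definition normal_lax_dfun :: "('o,'v,'h,'c,'x) dblcat_scheme \<Rightarrow> ('o,'v,'h,'c) dfun \<Rightarrow> bool" where
  "normal_lax_dfun D F \<longleftrightarrow>
    (\<forall>A\<in>Ob D. fo F A \<in> Ob D) \<and>
    (\<forall>f\<in>Ver D. fv F f \<in> Ver D \<and> vdom D (fv F f) = fo F (vdom D f) \<and> vcod D (fv F f) = fo F (vcod D f)) \<and>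
    (\<forall>J\<in>Hor D. fh F J \<in> Hor D \<and> hsrc D (fh F J) = fo F (hsrc D J) \<and> htgt D (fh F J) = fo F (htgt D J)) \<and>
    (\<forall>\<phi>\<in>Cel D. is_cell D (fc F \<phi>) (fh F (csrc D \<phi>)) (fh F (ctgt D \<phi>)) (fv F (cleft D \<phi>)) (fv F (cright D \<phi>))) \<and>
    \<comment> \<open>strict preservation of vertical structure\<close>
    (\<forall>f\<in>Ver D. \<forall>g\<in>Ver D. vcod D f = vdom D g \<longrightarrow> fv F (vcmp D g f) = vcmp D (fv F g) (fv F f)) \<and>
    (\<forall>A\<in>Ob D. fv F (vid D A) = vid D (fo F A)) \<and>
    (\<forall>\<phi>\<in>Cel D. \<forall>\<psi>\<in>Cel D. ctgt D \<phi> = csrc D \<psi> \<longrightarrow> fc F (cvcmp D \<psi> \<phi>) = cvcmp D (fc F \<psi>) (fc F \<phi>)) \<and>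
    (\<forall>J\<in>Hor D. fc F (cvid D J) = cvid D (fh F J)) \<and>
    \<comment> \<open>strict preservation of horizontal units (normality)\<close>
    (\<forall>A\<in>Ob D. fh F (hunit D A) = hunit D (fo F A)) \<and>
    (\<forall>f\<in>Ver D. fc F (cunit D f) = cunit D (fv F f)) \<and>
    \<comment> \<open>compositors: globular, natural, coherent\<close>
    (\<forall>J\<in>Hor D. \<forall>K\<in>Hor D. htgt D J = hsrc D K \<longrightarrow>
        is_cell D (fcmp F J K) (hcmp D (fh F J) (fh F K)) (fh F (hcmp D J K))
          (vid D (fo F (hsrc D J))) (vid D (fo F (htgt D K)))) \<and>
    (\<forall>\<phi>\<in>Cel D. \<forall>\<psi>\<in>Cel D. cright D \<phi> = cleft D \<psi> \<longrightarrow>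
        cvcmp D (fc F (chcmp D \<phi> \<psi>)) (fcmp F (csrc D \<phi>) (csrc D \<psi>))
        = cvcmp D (fcmp F (ctgt D \<phi>) (ctgt D \<psi>)) (chcmp D (fc F \<phi>) (fc F \<psi>))) \<and>
    (\<forall>J\<in>Hor D. \<forall>K\<in>Hor D. \<forall>L\<in>Hor D. htgt D J = hsrc D K \<longrightarrow> htgt D K = hsrc D L \<longrightarrow>
        cvcmp D (fc F (hassoc D J K L)) (cvcmp D (fcmp F (hcmp D J K) L) (chcmp D (fcmp F J K) (cvid D (fh F L))))
        = cvcmp D (fcmp F J (hcmp D K L)) (cvcmp D (chcmp D (cvid D (fh F J)) (fcmp F K L))
            (hassoc D (fh F J) (fh F K) (fh F L)))) \<and>
    (\<forall>J\<in>Hor D. cvcmp D (fc F (hlunit D J)) (fcmp F (hunit D (hsrc D J)) J) = hlunit D (fh F J)) \<and>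
    (\<forall>J\<in>Hor D. cvcmp D (fc F (hrunit D J)) (fcmp F J (hunit D (htgt D J))) = hrunit D (fh F J))"

definition dfun_id :: "('o,'v,'h,'c,'x) dblcat_scheme \<Rightarrow> ('o,'v,'h,'c) dfun" where
  "dfun_id D = \<lparr>fo = id, fv = id, fh = id, fc = id, fcmp = (\<lambda>J K. cvid D (hcmp D J K))\<rparr>"

definition dfun_comp :: "('o,'v,'h,'c,'x) dblcat_scheme \<Rightarrow> ('o,'v,'h,'c) dfun \<Rightarrow> ('o,'v,'h,'c) dfun \<Rightarrow> ('o,'v,'h,'c) dfun" where
  "dfun_comp D G F = \<lparr>fo = fo G \<circ> fo F, fv = fv G \<circ> fv F, fh = fh G \<circ> fh F, fc = fc G \<circ> fc F,
     fcmp = (\<lambda>J K. cvcmp D (fc G (fcmp F J K)) (fcmp G (fh F J) (fh F K)))\<rparr>"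

record ('o,'v,'h,'c) dtrans =
  tob :: "'o \<Rightarrow> 'v"
  thor :: "'h \<Rightarrow> 'c"

definition double_transformation :: "('o,'v,'h,'c,'x) dblcat_scheme \<Rightarrow> ('o,'v,'h,'c) dfun \<Rightarrow> ('o,'v,'h,'c) dfun
    \<Rightarrow> ('o,'v,'h,'c) dtrans \<Rightarrow> bool" where
  "double_transformation D F G \<alpha> \<longleftrightarrow>
    (\<forall>A\<in>Ob D. tob \<alpha> A \<in> Ver D \<and> vdom D (tob \<alpha> A) = fo F A \<and> vcod D (tob \<alpha> A) = fo G A) \<and>
    (\<forall>J\<in>Hor D. is_cell D (thor \<alpha> J) (fh F J) (fh G J) (tob \<alpha> (hsrc D J)) (tob \<alpha> (htgt D J))) \<and>
    (\<forall>f\<in>Ver D. vcmp D (fv G f) (tob \<alpha> (vdom D f)) = vcmp D (tob \<alpha> (vcod D f)) (fv F f)) \<and>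
    (\<forall>\<phi>\<in>Cel D. cvcmp D (thor \<alpha> (ctgt D \<phi>)) (fc F \<phi>) = cvcmp D (fc G \<phi>) (thor \<alpha> (csrc D \<phi>))) \<and>
    (\<forall>J\<in>Hor D. \<forall>K\<in>Hor D. htgt D J = hsrc D K \<longrightarrow>
        cvcmp D (thor \<alpha> (hcmp D J K)) (fcmp F J K) = cvcmp D (fcmp G J K) (chcmp D (thor \<alpha> J) (thor \<alpha> K))) \<and>
    (\<forall>A\<in>Ob D. thor \<alpha> (hunit D A) = cunit D (tob \<alpha> A))"

definition normal_lax_double_monad :: "('o,'v,'h,'c,'x) dblcat_scheme \<Rightarrow> ('o,'v,'h,'c) dfun
    \<Rightarrow> ('o,'v,'h,'c) dtrans \<Rightarrow> ('o,'v,'h,'c) dtrans \<Rightarrow> bool" where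
  "normal_lax_double_monad D T \<mu> \<iota> \<longleftrightarrow>
    double_category D \<and> normal_lax_dfun D T \<and>
    double_transformation D (dfun_comp D T T) T \<mu> \<and>
    double_transformation D (dfun_id D) T \<iota> \<and>
    \<comment> \<open>associativity  mu o T mu = mu o mu T\<close>
    (\<forall>A\<in>Ob D. vcmp D (tob \<mu> A) (fv T (tob \<mu> A)) = vcmp D (tob \<mu> A) (tob \<mu> (fo T A))) \<and>
    (\<forall>J\<in>Hor D. cvcmp D (thor \<mu> J) (fc T (thor \<mu> J)) = cvcmp D (thor \<mu> J) (thor \<mu> (fh T J))) \<and>
    \<comment> \<open>unit laws  mu o iota T = id = mu o T iota\<close>
    (\<forall>A\<in>Ob D. vcmp D (tob \<mu> A) (tob \<iota> (fo T A)) = vid D (fo T A) \<and>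
               vcmp D (tob \<mu> A) (fv T (tob \<iota> A)) = vid D (fo T A)) \<and>
    (\<forall>J\<in>Hor D. cvcmp D (thor \<mu> J) (thor \<iota> (fh T J)) = cvid D (fh T J) \<and>
               cvcmp D (thor \<mu> J) (fc T (thor \<iota> J)) = cvid D (fh T J))"

text \<open>Given J : A -/-> B, an opcartesian cell eta : 1_A => iota_A_* (sides id, iota_A) with
  horizontal target P, and a cartesian cell theta : iota_B_* => 1_TB (sides iota_B, id) with
  horizontal source Q, the cell iota_J_* : J (.) Q => P (.) TJ is the horizontal composite
  eta (.) iota_J (.) theta, adjusted by the unitors.\<close>
definition iota_star :: "('o,'v,'h,'c,'x) dblcat_scheme \<Rightarrow> ('o,'v,'h,'c) dfun \<Rightarrow> ('o,'v,'h,'c) dtrans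
    \<Rightarrow> 'h \<Rightarrow> 'h \<Rightarrow> 'c \<Rightarrow> 'h \<Rightarrow> 'c \<Rightarrow> 'c" where
  "iota_star D T \<iota> J P \<eta> Q \<theta> =
     cvcmp D (hrunit D (hcmp D P (fh T J)))
       (cvcmp D (chcmp D (chcmp D \<eta> (thor \<iota> J)) \<theta>)
          (chcmp D (cinv D (hlunit D J)) (cvid D Q)))"

definition right_BC :: "('o,'v,'h,'c,'x) dblcat_scheme \<Rightarrow> ('o,'v,'h,'c) dfun \<Rightarrow> ('o,'v,'h,'c) dtrans
    \<Rightarrow> 'h \<Rightarrow> bool" where
  "right_BC D T \<iota> J \<longleftrightarrow>
    (\<forall>P \<eta> Q \<theta>. companion_opcart D (tob \<iota> (hsrc D J)) P \<eta> \<longrightarrow>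
                companion_cart D (tob \<iota> (htgt D J)) Q \<theta> \<longrightarrow>
                cell_invertible D (iota_star D T \<iota> J P \<eta> Q \<theta>))"

end

theory Submission
  imports Defs
begin

locale dbl =
  fixes D :: "('o,'v,'h,'c) dblcat"
  assumes dc: "double_category D"
begin

lemma VA: "vertical_category_axioms D" and HA: "horizontal_data_axioms D"
  and CA: "cell_axioms D" and CO: "coherence_axioms D"
  using dc unfolding double_category_def by auto

lemma vid_simps[simp]:
  "A \<in> Ob D \<Longrightarrow> vid D A \<in> Ver D" "A \<in> Ob D \<Longrightarrow> vdom D (vid D A) = A" "A \<in> Ob D \<Longrightarrow> vcod D (vid D A) = A"
  using VA unfolding vertical_category_axioms_def by auto

lemma ver_ob[simp]: "f \<in> Ver D \<Longrightarrow> vdom D f \<in> Ob D" "f \<in> Ver D \<Longrightarrow> vcod D f \<in> Ob D"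
  using VA unfolding vertical_category_axioms_def by auto

lemma vcmp_simps[simp]:
  assumes "f \<in> Ver D" "g \<in> Ver D" "vcod D f = vdom D g"
  shows "vcmp D g f \<in> Ver D" "vdom D (vcmp D g f) = vdom D f" "vcod D (vcmp D g f) = vcod D g"
  using VA assms unfolding vertical_category_axioms_def by auto

lemma vcmp_vid[simp]:
  "f \<in> Ver D \<Longrightarrow> vdom D f = A \<Longrightarrow> vcmp D f (vid D A) = f"
  "f \<in> Ver D \<Longrightarrow> vcod D f = A \<Longrightarrow> vcmp D (vid D A) f = f"
  using VA unfolding vertical_category_axioms_def by auto

lemma vassoc[simp]:
  "f \<in> Ver D \<Longrightarrow> g \<in> Ver D \<Longrightarrow> h \<in> Ver D \<Longrightarrow> vcod D f = vdom D g \<Longrightarrow> vcod D g = vdom D h \<Longrightarrow>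
   vcmp D (vcmp D h g) f = vcmp D h (vcmp D g f)"
  using VA unfolding vertical_category_axioms_def by metis

lemma hor_ob[simp]: "J \<in> Hor D \<Longrightarrow> hsrc D J \<in> Ob D" "J \<in> Hor D \<Longrightarrow> htgt D J \<in> Ob D"
  using HA unfolding horizontal_data_axioms_def by auto

lemma hunit_simps[simp]:
  "A \<in> Ob D \<Longrightarrow> hunit D A \<in> Hor D" "A \<in> Ob D \<Longrightarrow> hsrc D (hunit D A) = A" "A \<in> Ob D \<Longrightarrow> htgt D (hunit D A) = A"
  using HA unfolding horizontal_data_axioms_def by auto

lemma hcmp_simps[simp]:
  assumes "J \<in> Hor D" "K \<in> Hor D" "htgt D J = hsrc D K"
  shows "hcmp D J K \<in> Hor D" "hsrc D (hcmp D J K) = hsrc D J" "htgt D (hcmp D J K) = htgt D K"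
  using HA assms unfolding horizontal_data_axioms_def by auto

lemma cel_bd[simp]:
  assumes "\<phi> \<in> Cel D"
  shows "csrc D \<phi> \<in> Hor D" "ctgt D \<phi> \<in> Hor D" "cleft D \<phi> \<in> Ver D" "cright D \<phi> \<in> Ver D"
    "vdom D (cleft D \<phi>) = hsrc D (csrc D \<phi>)" "vcod D (cleft D \<phi>) = hsrc D (ctgt D \<phi>)"
    "vdom D (cright D \<phi>) = htgt D (csrc D \<phi>)" "vcod D (cright D \<phi>) = htgt D (ctgt D \<phi>)"
  using CA assms unfolding cell_axioms_def by auto

lemma cvcmp_simps[simp]:
  assumes "\<phi> \<in> Cel D" "\<psi> \<in> Cel D" "ctgt D \<phi> = csrc D \<psi>"
  shows "cvcmp D \<psi> \<phi> \<in> Cel D" "csrc D (cvcmp D \<psi> \<phi>) = csrc D \<phi>" "ctgt D (cvcmp D \<psi> \<phi>) = ctgt D \<psi>"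
    "cleft D (cvcmp D \<psi> \<phi>) = vcmp D (cleft D \<psi>) (cleft D \<phi>)"
    "cright D (cvcmp D \<psi> \<phi>) = vcmp D (cright D \<psi>) (cright D \<phi>)"
  using CA assms unfolding cell_axioms_def is_cell_def by auto

lemma cvid_simps[simp]:
  assumes "J \<in> Hor D"
  shows "cvid D J \<in> Cel D" "csrc D (cvid D J) = J" "ctgt D (cvid D J) = J"
    "cleft D (cvid D J) = vid D (hsrc D J)" "cright D (cvid D J) = vid D (htgt D J)"
  using CA assms unfolding cell_axioms_def is_cell_def by auto

lemma cvid_unit[simp]:
  "\<phi> \<in> Cel D \<Longrightarrow> csrc D \<phi> = J \<Longrightarrow> cvcmp D \<phi> (cvid D J) = \<phi>"
  "\<phi> \<in> Cel D \<Longrightarrow> ctgt D \<phi> = J \<Longrightarrow> cvcmp D (cvid D J) \<phi> = \<phi>"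
  using CA unfolding cell_axioms_def by auto

lemma cassoc[simp]:
  "\<phi> \<in> Cel D \<Longrightarrow> \<psi> \<in> Cel D \<Longrightarrow> \<chi> \<in> Cel D \<Longrightarrow> ctgt D \<phi> = csrc D \<psi> \<Longrightarrow> ctgt D \<psi> = csrc D \<chi> \<Longrightarrow>
   cvcmp D (cvcmp D \<chi> \<psi>) \<phi> = cvcmp D \<chi> (cvcmp D \<psi> \<phi>)"
  using CA unfolding cell_axioms_def by metis

lemma chcmp_simps[simp]:
  assumes "\<phi> \<in> Cel D" "\<psi> \<in> Cel D" "cright D \<phi> = cleft D \<psi>"
  shows "chcmp D \<phi> \<psi> \<in> Cel D" "csrc D (chcmp D \<phi> \<psi>) = hcmp D (csrc D \<phi>) (csrc D \<psi>)"
    "ctgt D (chcmp D \<phi> \<psi>) = hcmp D (ctgt D \<phi>) (ctgt D \<psi>)"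
    "cleft D (chcmp D \<phi> \<psi>) = cleft D \<phi>" "cright D (chcmp D \<phi> \<psi>) = cright D \<psi>"
  using CA assms unfolding cell_axioms_def is_cell_def by auto

lemma cunit_simps[simp]:
  assumes "f \<in> Ver D"
  shows "cunit D f \<in> Cel D" "csrc D (cunit D f) = hunit D (vdom D f)" "ctgt D (cunit D f) = hunit D (vcod D f)"
    "cleft D (cunit D f) = f" "cright D (cunit D f) = f"
  using CA assms unfolding cell_axioms_def is_cell_def by auto

lemma interchange:
  "\<phi> \<in> Cel D \<Longrightarrow> \<psi> \<in> Cel D \<Longrightarrow> \<phi>' \<in> Cel D \<Longrightarrow> \<psi>' \<in> Cel D \<Longrightarrow>
   ctgt D \<phi> = csrc D \<psi> \<Longrightarrow> ctgt D \<phi>' = csrc D \<psi>' \<Longrightarrow> cright D \<phi> = cleft D \<phi>' \<Longrightarrow> cright D \<psi> = cleft D \<psi>' \<Longrightarrow>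
   chcmp D (cvcmp D \<psi> \<phi>) (cvcmp D \<psi>' \<phi>') = cvcmp D (chcmp D \<psi> \<psi>') (chcmp D \<phi> \<phi>')"
  using CA unfolding cell_axioms_def by metis

lemma hcmp_cvid[simp]:
  "J \<in> Hor D \<Longrightarrow> K \<in> Hor D \<Longrightarrow> htgt D J = hsrc D K \<Longrightarrow> chcmp D (cvid D J) (cvid D K) = cvid D (hcmp D J K)"
  using CA unfolding cell_axioms_def by metis

lemma cunit_vcmp:
  "f \<in> Ver D \<Longrightarrow> g \<in> Ver D \<Longrightarrow> vcod D f = vdom D g \<Longrightarrow> cunit D (vcmp D g f) = cvcmp D (cunit D g) (cunit D f)"
  using CA unfolding cell_axioms_def by metis

lemma cunit_comb[simp]:
  "f \<in> Ver D \<Longrightarrow> g \<in> Ver D \<Longrightarrow> vcod D f = vdom D g \<Longrightarrow> cvcmp D (cunit D g) (cunit D f) = cunit D (vcmp D g f)"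
  "f \<in> Ver D \<Longrightarrow> g \<in> Ver D \<Longrightarrow> vcod D f = vdom D g \<Longrightarrow> X \<in> Cel D \<Longrightarrow> ctgt D X = hunit D (vdom D f) \<Longrightarrow>
     cvcmp D (cunit D g) (cvcmp D (cunit D f) X) = cvcmp D (cunit D (vcmp D g f)) X"
  by (simp_all add: cunit_vcmp)

lemma cunit_vid[simp]: "A \<in> Ob D \<Longrightarrow> cunit D (vid D A) = cvid D (hunit D A)"
  using CA unfolding cell_axioms_def by metis


lemma inv_basic:
  assumes "cell_invertible D \<phi>"
  shows "cinv D \<phi> \<in> Cel D" "csrc D (cinv D \<phi>) = ctgt D \<phi>" "ctgt D (cinv D \<phi>) = csrc D \<phi>"
    "cvcmp D (cinv D \<phi>) \<phi> = cvid D (csrc D \<phi>)" "cvcmp D \<phi> (cinv D \<phi>) = cvid D (ctgt D \<phi>)"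
proof -
  have "\<exists>\<psi>. \<psi> \<in> Cel D \<and> csrc D \<psi> = ctgt D \<phi> \<and> ctgt D \<psi> = csrc D \<phi> \<and>
      cvcmp D \<psi> \<phi> = cvid D (csrc D \<phi>) \<and> cvcmp D \<phi> \<psi> = cvid D (ctgt D \<phi>)"
    using assms unfolding cell_invertible_def by blast
  from someI_ex[OF this] show "cinv D \<phi> \<in> Cel D" "csrc D (cinv D \<phi>) = ctgt D \<phi>" "ctgt D (cinv D \<phi>) = csrc D \<phi>"
    "cvcmp D (cinv D \<phi>) \<phi> = cvid D (csrc D \<phi>)" "cvcmp D \<phi> (cinv D \<phi>) = cvid D (ctgt D \<phi>)"
    unfolding cinv_def by auto
qed

lemma inv_cel: "cell_invertible D \<phi> \<Longrightarrow> \<phi> \<in> Cel D"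
  unfolding cell_invertible_def by auto

lemma cinv_simps[simp]:
  assumes "cell_invertible D \<phi>" "cleft D \<phi> = vid D (hsrc D (csrc D \<phi>))" "cright D \<phi> = vid D (htgt D (csrc D \<phi>))"
  shows "cinv D \<phi> \<in> Cel D" "csrc D (cinv D \<phi>) = ctgt D \<phi>" "ctgt D (cinv D \<phi>) = csrc D \<phi>"
    "cleft D (cinv D \<phi>) = cleft D \<phi>" "cright D (cinv D \<phi>) = cright D \<phi>"
proof -
  note b = inv_basic[OF assms(1)]
  have p: "\<phi> \<in> Cel D" using inv_cel assms by auto
  show "cinv D \<phi> \<in> Cel D" "csrc D (cinv D \<phi>) = ctgt D \<phi>" "ctgt D (cinv D \<phi>) = csrc D \<phi>" using b by auto
  have "cleft D (cvcmp D (cinv D \<phi>) \<phi>) = vid D (hsrc D (csrc D \<phi>))" using b p by simp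
  moreover have "cleft D (cvcmp D (cinv D \<phi>) \<phi>) = vcmp D (cleft D (cinv D \<phi>)) (cleft D \<phi>)"
    using b p by (intro cvcmp_simps) auto
  ultimately have "vcmp D (cleft D (cinv D \<phi>)) (cleft D \<phi>) = vid D (hsrc D (csrc D \<phi>))" by simp
  moreover have "hsrc D (csrc D \<phi>) = hsrc D (ctgt D \<phi>)"
    by (metis assms(2) cel_bd(5,6) hor_ob(1) p cel_bd(1) vid_simps(2,3))
  ultimately show "cleft D (cinv D \<phi>) = cleft D \<phi>" using assms b p by simp
  have "cright D (cvcmp D (cinv D \<phi>) \<phi>) = vid D (htgt D (csrc D \<phi>))" using b p by simp
  moreover have "cright D (cvcmp D (cinv D \<phi>) \<phi>) = vcmp D (cright D (cinv D \<phi>)) (cright D \<phi>)"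
    using b p by (intro cvcmp_simps) auto
  ultimately have "vcmp D (cright D (cinv D \<phi>)) (cright D \<phi>) = vid D (htgt D (csrc D \<phi>))" by simp
  moreover have "htgt D (csrc D \<phi>) = htgt D (ctgt D \<phi>)"
    by (metis assms(3) cel_bd(7,8) hor_ob(2) p cel_bd(1) vid_simps(2,3))
  ultimately show "cright D (cinv D \<phi>) = cright D \<phi>" using assms b p by simp
qed

lemma cinv_cancel[simp]:
  "cell_invertible D \<phi> \<Longrightarrow> cvcmp D (cinv D \<phi>) \<phi> = cvid D (csrc D \<phi>)"
  "cell_invertible D \<phi> \<Longrightarrow> cvcmp D \<phi> (cinv D \<phi>) = cvid D (ctgt D \<phi>)"
  "cell_invertible D \<phi> \<Longrightarrow> X \<in> Cel D \<Longrightarrow> ctgt D X = csrc D \<phi> \<Longrightarrow> cvcmp D (cinv D \<phi>) (cvcmp D \<phi> X) = X"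
  "cell_invertible D \<phi> \<Longrightarrow> X \<in> Cel D \<Longrightarrow> ctgt D X = ctgt D \<phi> \<Longrightarrow> cvcmp D \<phi> (cvcmp D (cinv D \<phi>) X) = X"
proof -
  assume a: "cell_invertible D \<phi>"
  note b = inv_basic[OF a] and p = inv_cel[OF a]
  show "cvcmp D (cinv D \<phi>) \<phi> = cvid D (csrc D \<phi>)" "cvcmp D \<phi> (cinv D \<phi>) = cvid D (ctgt D \<phi>)" using b by auto
  { assume "X \<in> Cel D" "ctgt D X = csrc D \<phi>"
    thus "cvcmp D (cinv D \<phi>) (cvcmp D \<phi> X) = X" using b p cassoc[of X \<phi> "cinv D \<phi>"] by simp }
  { assume "X \<in> Cel D" "ctgt D X = ctgt D \<phi>"
    thus "cvcmp D \<phi> (cvcmp D (cinv D \<phi>) X) = X" using b p cassoc[of X "cinv D \<phi>" \<phi>] by simp }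
qed

lemma assoc_simps[simp]:
  assumes "J \<in> Hor D" "K \<in> Hor D" "L \<in> Hor D" "htgt D J = hsrc D K" "htgt D K = hsrc D L"
  shows "hassoc D J K L \<in> Cel D" "csrc D (hassoc D J K L) = hcmp D (hcmp D J K) L"
    "ctgt D (hassoc D J K L) = hcmp D J (hcmp D K L)" "cleft D (hassoc D J K L) = vid D (hsrc D J)"
    "cright D (hassoc D J K L) = vid D (htgt D L)" "cell_invertible D (hassoc D J K L)"
  using CO assms unfolding coherence_axioms_def is_cell_def by auto

lemma lunit_simps[simp]:
  assumes "J \<in> Hor D"
  shows "hlunit D J \<in> Cel D" "csrc D (hlunit D J) = hcmp D (hunit D (hsrc D J)) J"
    "ctgt D (hlunit D J) = J" "cleft D (hlunit D J) = vid D (hsrc D J)"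
    "cright D (hlunit D J) = vid D (htgt D J)" "cell_invertible D (hlunit D J)"
  using CO assms unfolding coherence_axioms_def is_cell_def by auto

lemma runit_simps[simp]:
  assumes "J \<in> Hor D"
  shows "hrunit D J \<in> Cel D" "csrc D (hrunit D J) = hcmp D J (hunit D (htgt D J))"
    "ctgt D (hrunit D J) = J" "cleft D (hrunit D J) = vid D (hsrc D J)"
    "cright D (hrunit D J) = vid D (htgt D J)" "cell_invertible D (hrunit D J)"
  using CO assms unfolding coherence_axioms_def is_cell_def by auto

lemma assoc_nat:
  "\<phi> \<in> Cel D \<Longrightarrow> \<psi> \<in> Cel D \<Longrightarrow> \<chi> \<in> Cel D \<Longrightarrow> cright D \<phi> = cleft D \<psi> \<Longrightarrow> cright D \<psi> = cleft D \<chi> \<Longrightarrow>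
   cvcmp D (hassoc D (ctgt D \<phi>) (ctgt D \<psi>) (ctgt D \<chi>)) (chcmp D (chcmp D \<phi> \<psi>) \<chi>)
   = cvcmp D (chcmp D \<phi> (chcmp D \<psi> \<chi>)) (hassoc D (csrc D \<phi>) (csrc D \<psi>) (csrc D \<chi>))"
  using CO unfolding coherence_axioms_def by metis

lemma lunit_nat:
  "\<phi> \<in> Cel D \<Longrightarrow> cvcmp D (hlunit D (ctgt D \<phi>)) (chcmp D (cunit D (cleft D \<phi>)) \<phi>)
        = cvcmp D \<phi> (hlunit D (csrc D \<phi>))"
  using CO unfolding coherence_axioms_def by metis

lemma runit_nat:
  "\<phi> \<in> Cel D \<Longrightarrow> cvcmp D (hrunit D (ctgt D \<phi>)) (chcmp D \<phi> (cunit D (cright D \<phi>)))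
        = cvcmp D \<phi> (hrunit D (csrc D \<phi>))"
  using CO unfolding coherence_axioms_def by metis

lemma pentagon:
  "J \<in> Hor D \<Longrightarrow> K \<in> Hor D \<Longrightarrow> L \<in> Hor D \<Longrightarrow> M \<in> Hor D \<Longrightarrow>
   htgt D J = hsrc D K \<Longrightarrow> htgt D K = hsrc D L \<Longrightarrow> htgt D L = hsrc D M \<Longrightarrow>
        cvcmp D (hassoc D J K (hcmp D L M)) (hassoc D (hcmp D J K) L M)
        = cvcmp D (chcmp D (cvid D J) (hassoc D K L M))
            (cvcmp D (hassoc D J (hcmp D K L) M) (chcmp D (hassoc D J K L) (cvid D M)))"
  using CO unfolding coherence_axioms_def by metis

lemma triangle:
  "J \<in> Hor D \<Longrightarrow> K \<in> Hor D \<Longrightarrow> htgt D J = hsrc D K \<Longrightarrow>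
        cvcmp D (chcmp D (cvid D J) (hlunit D K)) (hassoc D J (hunit D (htgt D J)) K)
        = chcmp D (hrunit D J) (cvid D K)"
  using CO unfolding coherence_axioms_def by metis


abbreviation vc (infixr "\<cdot>" 55) where "\<psi> \<cdot> \<phi> \<equiv> cvcmp D \<psi> \<phi>"
abbreviation hc (infix "\<odot>" 65) where "\<phi> \<odot> \<psi> \<equiv> chcmp D \<phi> \<psi>"
abbreviation hh (infix "\<otimes>" 70) where "J \<otimes> K \<equiv> hcmp D J K"
abbreviation "lam J \<equiv> hlunit D J"
abbreviation "rho J \<equiv> hrunit D J"
abbreviation "asc J K L \<equiv> hassoc D J K L"
abbreviation "lami J \<equiv> cinv D (hlunit D J)"
abbreviation "rhoi J \<equiv> cinv D (hrunit D J)"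
abbreviation "asci J K L \<equiv> cinv D (hassoc D J K L)"
abbreviation "u1 X \<equiv> hunit D X"
abbreviation "ii J \<equiv> cvid D J"
abbreviation "cu f \<equiv> cunit D f"

lemma epi_cancel:
  "cell_invertible D \<omega> \<Longrightarrow> X \<in> Cel D \<Longrightarrow> Y \<in> Cel D \<Longrightarrow> csrc D X = ctgt D \<omega> \<Longrightarrow> csrc D Y = ctgt D \<omega> \<Longrightarrow>
   X \<cdot> \<omega> = Y \<cdot> \<omega> \<Longrightarrow> X = Y"
proof -
  assume a: "cell_invertible D \<omega>" "X \<in> Cel D" "Y \<in> Cel D" "csrc D X = ctgt D \<omega>" "csrc D Y = ctgt D \<omega>"
     "X \<cdot> \<omega> = Y \<cdot> \<omega>"
  note b = inv_basic[OF a(1)] and p = inv_cel[OF a(1)]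
  have "X = X \<cdot> (\<omega> \<cdot> cinv D \<omega>)" using a(1-5) b by simp
  also have "\<dots> = (X \<cdot> \<omega>) \<cdot> cinv D \<omega>" using a(1-5) b p by simp
  also have "\<dots> = (Y \<cdot> \<omega>) \<cdot> cinv D \<omega>" using a by simp
  also have "\<dots> = Y" using a(1-5) b p by simp
  finally show ?thesis .
qed

lemma mono_cancel:
  "cell_invertible D \<omega> \<Longrightarrow> X \<in> Cel D \<Longrightarrow> Y \<in> Cel D \<Longrightarrow> ctgt D X = csrc D \<omega> \<Longrightarrow> ctgt D Y = csrc D \<omega> \<Longrightarrow>
   \<omega> \<cdot> X = \<omega> \<cdot> Y \<Longrightarrow> X = Y"
proof -
  assume a: "cell_invertible D \<omega>" "X \<in> Cel D" "Y \<in> Cel D" "ctgt D X = csrc D \<omega>" "ctgt D Y = csrc D \<omega>"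
     "\<omega> \<cdot> X = \<omega> \<cdot> Y"
  note b = inv_basic[OF a(1)] and p = inv_cel[OF a(1)]
  have "X = cinv D \<omega> \<cdot> (\<omega> \<cdot> X)" using a(1-5) b p by simp
  also have "\<dots> = cinv D \<omega> \<cdot> (\<omega> \<cdot> Y)" using a by simp
  also have "\<dots> = Y" using a(1-5) b p by simp
  finally show ?thesis .
qed

lemma inv_vcmp:
  "cell_invertible D \<phi> \<Longrightarrow> cell_invertible D \<psi> \<Longrightarrow> ctgt D \<phi> = csrc D \<psi> \<Longrightarrow> cell_invertible D (\<psi> \<cdot> \<phi>)"
proof -
  assume a: "cell_invertible D \<phi>" "cell_invertible D \<psi>" "ctgt D \<phi> = csrc D \<psi>"
  note b1 = inv_basic[OF a(1)] and p1 = inv_cel[OF a(1)]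
  note b2 = inv_basic[OF a(2)] and p2 = inv_cel[OF a(2)]
  show ?thesis unfolding cell_invertible_def
    apply (rule conjI) using a p1 p2 apply simp
    apply (rule bexI[of _ "cinv D \<phi> \<cdot> cinv D \<psi>"])
    using a b1 b2 p1 p2 by simp_all
qed

lemma inv_cvid[simp]: "J \<in> Hor D \<Longrightarrow> cell_invertible D (ii J)"
  unfolding cell_invertible_def by (intro conjI bexI[of _ "ii J"]) simp_all

lemma inv_hcmp:
  assumes "cell_invertible D \<phi>" "cell_invertible D \<psi>"
    "cleft D \<phi> = vid D (hsrc D (csrc D \<phi>))" "cright D \<phi> = vid D (htgt D (csrc D \<phi>))"
    "cleft D \<psi> = vid D (hsrc D (csrc D \<psi>))" "cright D \<psi> = vid D (htgt D (csrc D \<psi>))"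
    "htgt D (csrc D \<phi>) = hsrc D (csrc D \<psi>)"
  shows "cell_invertible D (\<phi> \<odot> \<psi>)"
proof -
  note b1 = inv_basic[OF assms(1)] and p1 = inv_cel[OF assms(1)]
  note b2 = inv_basic[OF assms(2)] and p2 = inv_cel[OF assms(2)]
  have ht: "htgt D (ctgt D \<phi>) = hsrc D (ctgt D \<psi>)"
    by (metis assms(4,5,7) cel_bd(6,8) p1 p2 cel_bd(1) hor_ob vid_simps(3))
  have e1: "(cinv D \<phi> \<odot> cinv D \<psi>) \<cdot> (\<phi> \<odot> \<psi>) = ii (csrc D \<phi>) \<odot> ii (csrc D \<psi>)"
    using assms b1 b2 p1 p2 by (subst interchange[symmetric]) simp_all
  have e2: "(\<phi> \<odot> \<psi>) \<cdot> (cinv D \<phi> \<odot> cinv D \<psi>) = ii (ctgt D \<phi>) \<odot> ii (ctgt D \<psi>)"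
    using assms b1 b2 p1 p2 by (subst interchange[symmetric]) simp_all
  show ?thesis unfolding cell_invertible_def
    apply (rule conjI) using assms p1 p2 apply simp
    apply (rule bexI[of _ "cinv D \<phi> \<odot> cinv D \<psi>"])
    using assms b1 b2 p1 p2 e1 e2 ht by simp_all
qed

lemma lfaith:
  assumes "\<phi> \<in> Cel D" "\<psi> \<in> Cel D" "csrc D \<phi> = csrc D \<psi>" "ctgt D \<phi> = ctgt D \<psi>" "cleft D \<phi> = cleft D \<psi>"
    "cu (cleft D \<phi>) \<odot> \<phi> = cu (cleft D \<phi>) \<odot> \<psi>"
  shows "\<phi> = \<psi>"
proof -
  have "\<phi> \<cdot> lam (csrc D \<phi>) = lam (ctgt D \<phi>) \<cdot> (cu (cleft D \<phi>) \<odot> \<phi>)" by (rule lunit_nat[OF assms(1), symmetric])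
  also have "\<dots> = lam (ctgt D \<psi>) \<cdot> (cu (cleft D \<psi>) \<odot> \<psi>)" by (metis assms(4,5,6))
  also have "\<dots> = \<psi> \<cdot> lam (csrc D \<psi>)" by (rule lunit_nat[OF assms(2)])
  finally have e: "\<phi> \<cdot> lam (csrc D \<phi>) = \<psi> \<cdot> lam (csrc D \<phi>)" unfolding assms(3) .
  show ?thesis
    apply (rule epi_cancel[OF _ assms(1,2) _ _ e]) using assms(1,2,3) by simp_all
qed

lemma rfaith:
  assumes "\<phi> \<in> Cel D" "\<psi> \<in> Cel D" "csrc D \<phi> = csrc D \<psi>" "ctgt D \<phi> = ctgt D \<psi>" "cright D \<phi> = cright D \<psi>"
    "\<phi> \<odot> cu (cright D \<phi>) = \<psi> \<odot> cu (cright D \<phi>)"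
  shows "\<phi> = \<psi>"
proof -
  have "\<phi> \<cdot> rho (csrc D \<phi>) = rho (ctgt D \<phi>) \<cdot> (\<phi> \<odot> cu (cright D \<phi>))" by (rule runit_nat[OF assms(1), symmetric])
  also have "\<dots> = rho (ctgt D \<psi>) \<cdot> (\<psi> \<odot> cu (cright D \<psi>))" by (metis assms(4,5,6))
  also have "\<dots> = \<psi> \<cdot> rho (csrc D \<psi>)" by (rule runit_nat[OF assms(2)])
  finally have e: "\<phi> \<cdot> rho (csrc D \<phi>) = \<psi> \<cdot> rho (csrc D \<phi>)" unfolding assms(3) .
  show ?thesis
    apply (rule epi_cancel[OF _ assms(1,2) _ _ e]) using assms(1,2,3) by simp_all
qed

end
context dbl begin

lemma ra: "A \<cdot> B = R \<Longrightarrow> A \<in> Cel D \<Longrightarrow> B \<in> Cel D \<Longrightarrow> Z \<in> Cel D \<Longrightarrow> ctgt D B = csrc D A \<Longrightarrow> ctgt D Z = csrc D B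
   \<Longrightarrow> A \<cdot> (B \<cdot> Z) = R \<cdot> Z"
  by (metis cassoc)

lemma hsplit_r:
  "\<phi> \<in> Cel D \<Longrightarrow> \<psi> \<in> Cel D \<Longrightarrow> L \<in> Hor D \<Longrightarrow> ctgt D \<phi> = csrc D \<psi> \<Longrightarrow> cright D \<phi> = vid D (hsrc D L) \<Longrightarrow>
   cright D \<psi> = vid D (hsrc D L) \<Longrightarrow> (\<psi> \<cdot> \<phi>) \<odot> ii L = (\<psi> \<odot> ii L) \<cdot> (\<phi> \<odot> ii L)"
  using interchange[of \<phi> \<psi> "ii L" "ii L"] by simp

lemma hsplit_l:
  "\<phi> \<in> Cel D \<Longrightarrow> \<psi> \<in> Cel D \<Longrightarrow> J \<in> Hor D \<Longrightarrow> ctgt D \<phi> = csrc D \<psi> \<Longrightarrow> cleft D \<phi> = vid D (htgt D J) \<Longrightarrow>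
   cleft D \<psi> = vid D (htgt D J) \<Longrightarrow> ii J \<odot> (\<psi> \<cdot> \<phi>) = (ii J \<odot> \<psi>) \<cdot> (ii J \<odot> \<phi>)"
  using interchange[of "ii J" "ii J" \<phi> \<psi>] by simp

lemma kelly_l:
  assumes J: "J \<in> Hor D" and L: "L \<in> Hor D" and JL: "htgt D J = hsrc D L"
  shows "lam (J \<otimes> L) \<cdot> asc (u1 (hsrc D J)) J L = lam J \<odot> ii L"
proof -
  define X where "X = hsrc D J"
  define one where "one = u1 X"
  have X: "X \<in> Ob D" using J X_def by simp
  have o: "one \<in> Hor D" "hsrc D one = X" "htgt D one = X" using X one_def by auto
  have oJ: "htgt D one = hsrc D J" using o X_def by simp
  note ax = J L JL o oJ
  have P: "asc one one (J \<otimes> L) \<cdot> asc (one \<otimes> one) J L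
      = (ii one \<odot> asc one J L) \<cdot> (asc one (one \<otimes> J) L \<cdot> (asc one one J \<odot> ii L))"
    using pentagon[of one one J L] ax by simp
  have Tb: "(ii one \<odot> lam (J \<otimes> L)) \<cdot> asc one one (J \<otimes> L) = rho one \<odot> ii (J \<otimes> L)"
    using triangle[of one "J \<otimes> L"] ax by (simp add: one_def)
  have Tc: "(ii one \<odot> lam J) \<cdot> asc one one J = rho one \<odot> ii J"
    using triangle[of one J] ax by (simp add: one_def)
  have Nd: "asc one J L \<cdot> ((rho one \<odot> ii J) \<odot> ii L) = (rho one \<odot> ii (J \<otimes> L)) \<cdot> asc (one \<otimes> one) J L"
    using assoc_nat[of "rho one" "ii J" "ii L"] ax by (simp add: one_def)
  have Ne: "asc one J L \<cdot> ((ii one \<odot> lam J) \<odot> ii L) = (ii one \<odot> (lam J \<odot> ii L)) \<cdot> asc one (one \<otimes> J) L"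
    using assoc_nat[of "ii one" "lam J" "ii L"] ax by (simp add: one_def X_def)
  have Ic: "((ii one \<odot> lam J) \<cdot> asc one one J) \<odot> ii L = ((ii one \<odot> lam J) \<odot> ii L) \<cdot> (asc one one J \<odot> ii L)"
    using ax by (intro hsplit_r) (simp_all add: one_def X_def)
  define W where "W = asc one (one \<otimes> J) L \<cdot> (asc one one J \<odot> ii L)"
  have Winv: "cell_invertible D W" unfolding W_def using ax
    by (intro inv_vcmp inv_hcmp) (simp_all add: one_def X_def)
  have "(ii one \<odot> lam (J \<otimes> L)) \<cdot> ((ii one \<odot> asc one J L) \<cdot> W)
     = (ii one \<odot> lam (J \<otimes> L)) \<cdot> (asc one one (J \<otimes> L) \<cdot> asc (one \<otimes> one) J L)"
    unfolding W_def P ..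
  also have "\<dots> = (rho one \<odot> ii (J \<otimes> L)) \<cdot> asc (one \<otimes> one) J L"
    by (rule ra[OF Tb]) (use ax in \<open>simp_all add: one_def X_def\<close>)
  also have "\<dots> = asc one J L \<cdot> ((rho one \<odot> ii J) \<odot> ii L)" using Nd by simp
  also have "\<dots> = asc one J L \<cdot> (((ii one \<odot> lam J) \<cdot> asc one one J) \<odot> ii L)" using Tc by simp
  also have "\<dots> = asc one J L \<cdot> (((ii one \<odot> lam J) \<odot> ii L) \<cdot> (asc one one J \<odot> ii L))" using Ic by simp
  also have "\<dots> = (ii one \<odot> (lam J \<odot> ii L)) \<cdot> W"
    unfolding W_def
    using ra[OF Ne, of "asc one one J \<odot> ii L"] ax by (simp add: one_def X_def)
  finally have E: "(ii one \<odot> lam (J \<otimes> L)) \<cdot> ((ii one \<odot> asc one J L) \<cdot> W) = (ii one \<odot> (lam J \<odot> ii L)) \<cdot> W" .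
  have E2: "(ii one \<odot> lam (J \<otimes> L)) \<cdot> (ii one \<odot> asc one J L) = ii one \<odot> (lam J \<odot> ii L)"
    apply (rule epi_cancel[OF Winv])
    using ax E unfolding W_def by (simp_all add: one_def X_def)
  have E3: "ii one \<odot> (lam (J \<otimes> L) \<cdot> asc one J L) = ii one \<odot> (lam J \<odot> ii L)"
    using E2 ax by (subst hsplit_l) (simp_all add: one_def X_def)
  show ?thesis unfolding X_def[symmetric] one_def[symmetric]
    apply (rule lfaith)
    using ax E3 by (simp_all add: one_def X_def)
qed


lemma kelly_r:
  assumes J: "J \<in> Hor D" and L: "L \<in> Hor D" and JL: "htgt D J = hsrc D L"
  shows "(ii J \<odot> rho L) \<cdot> asc J L (u1 (htgt D L)) = rho (J \<otimes> L)"
proof -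
  define Z where "Z = htgt D L"
  define one where "one = u1 Z"
  have Z: "Z \<in> Ob D" using L Z_def by simp
  have o: "one \<in> Hor D" "hsrc D one = Z" "htgt D one = Z" using Z one_def by auto
  have oL: "htgt D L = hsrc D one" using o Z_def by simp
  note ax = J L JL o oL Z
  have P: "asc J L (one \<otimes> one) \<cdot> asc (J \<otimes> L) one one
      = (ii J \<odot> asc L one one) \<cdot> (asc J (L \<otimes> one) one \<cdot> (asc J L one \<odot> ii one))"
    using pentagon[of J L one one] ax by simp
  have T1: "(ii L \<odot> lam one) \<cdot> asc L one one = rho L \<odot> ii one"
    using triangle[of L one] ax by (simp add: one_def)
  have T2: "(ii (J \<otimes> L) \<odot> lam one) \<cdot> asc (J \<otimes> L) one one = rho (J \<otimes> L) \<odot> ii one"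
    using triangle[of "J \<otimes> L" one] ax by (simp add: one_def)
  have N1: "asc J L one \<cdot> (ii (J \<otimes> L) \<odot> lam one) = (ii J \<odot> (ii L \<odot> lam one)) \<cdot> asc J L (one \<otimes> one)"
    using assoc_nat[of "ii J" "ii L" "lam one"] ax by (simp add: one_def)
  have N2: "asc J L one \<cdot> ((ii J \<odot> rho L) \<odot> ii one) = (ii J \<odot> (rho L \<odot> ii one)) \<cdot> asc J (L \<otimes> one) one"
    using assoc_nat[of "ii J" "rho L" "ii one"] ax by (simp add: one_def)
  have S: "ii J \<odot> ((ii L \<odot> lam one) \<cdot> asc L one one) = (ii J \<odot> (ii L \<odot> lam one)) \<cdot> (ii J \<odot> asc L one one)"
    using ax by (intro hsplit_l) (simp_all add: one_def)
  have S2: "((ii J \<odot> rho L) \<cdot> asc J L one) \<odot> ii one = ((ii J \<odot> rho L) \<odot> ii one) \<cdot> (asc J L one \<odot> ii one)"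
    using ax by (intro hsplit_r) (simp_all add: one_def)
  have "asc J L one \<cdot> (rho (J \<otimes> L) \<odot> ii one) = asc J L one \<cdot> ((ii (J \<otimes> L) \<odot> lam one) \<cdot> asc (J \<otimes> L) one one)"
    using T2 by simp
  also have "\<dots> = (ii J \<odot> (ii L \<odot> lam one)) \<cdot> (asc J L (one \<otimes> one) \<cdot> asc (J \<otimes> L) one one)"
    using ra[OF N1, of "asc (J \<otimes> L) one one"] ax by (simp add: one_def)
  also have "\<dots> = (ii J \<odot> (ii L \<odot> lam one)) \<cdot> ((ii J \<odot> asc L one one) \<cdot> (asc J (L \<otimes> one) one \<cdot> (asc J L one \<odot> ii one)))"
    unfolding P ..
  also have "\<dots> = (ii J \<odot> ((ii L \<odot> lam one) \<cdot> asc L one one)) \<cdot> (asc J (L \<otimes> one) one \<cdot> (asc J L one \<odot> ii one))"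
    unfolding S using ax by (simp add: one_def)
  also have "\<dots> = (ii J \<odot> (rho L \<odot> ii one)) \<cdot> (asc J (L \<otimes> one) one \<cdot> (asc J L one \<odot> ii one))"
    unfolding T1 ..
  also have "\<dots> = asc J L one \<cdot> (((ii J \<odot> rho L) \<odot> ii one) \<cdot> (asc J L one \<odot> ii one))"
    using ra[OF N2, of "asc J L one \<odot> ii one"] ax by (simp add: one_def)
  also have "\<dots> = asc J L one \<cdot> (((ii J \<odot> rho L) \<cdot> asc J L one) \<odot> ii one)"
    unfolding S2 ..
  finally have E: "asc J L one \<cdot> (rho (J \<otimes> L) \<odot> ii one) = asc J L one \<cdot> (((ii J \<odot> rho L) \<cdot> asc J L one) \<odot> ii one)" .
  have E2: "rho (J \<otimes> L) \<odot> ii one = ((ii J \<odot> rho L) \<cdot> asc J L one) \<odot> ii one"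
    apply (rule mono_cancel[OF _ _ _ _ _ E])
    using ax by (simp_all add: one_def)
  show ?thesis unfolding Z_def[symmetric] one_def[symmetric]
    apply (rule sym, rule rfaith)
    using ax E2 by (simp_all add: one_def)
qed

lemma lam_rho_unit:
  assumes X: "X \<in> Ob D"
  shows "rho (u1 X) = lam (u1 X)"
proof -
  define one where "one = u1 X"
  have o: "one \<in> Hor D" "hsrc D one = X" "htgt D one = X" using X one_def by auto
  have K: "lam (one \<otimes> one) \<cdot> asc one one one = lam one \<odot> ii one"
    using kelly_l[of one one] o by (simp add: one_def)
  have N: "lam one \<cdot> (ii one \<odot> lam one) = lam one \<cdot> lam (one \<otimes> one)"
    using lunit_nat[of "lam one"] o X by (simp add: one_def)
  have N2: "ii one \<odot> lam one = lam (one \<otimes> one)"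
    apply (rule mono_cancel[OF _ _ _ _ _ N]) using o by (simp_all add: one_def)
  have T: "(ii one \<odot> lam one) \<cdot> asc one one one = rho one \<odot> ii one"
    using triangle[of one one] o by (simp add: one_def)
  have e: "rho one \<odot> ii one = lam one \<odot> ii one" using T K N2 by simp
  have "rho one = lam one"
    by (rule rfaith) (use o e X in \<open>simp_all add: one_def\<close>)
  thus ?thesis by (simp add: one_def)
qed

end
context dbl begin

declare lam_rho_unit[simp]

lemma cart_ex:
  assumes "cartesian D \<phi>" "\<psi> \<in> Cel D" "h \<in> Ver D" "k \<in> Ver D"
    "vcod D h = vdom D (cleft D \<phi>)" "vcod D k = vdom D (cright D \<phi>)" "ctgt D \<psi> = ctgt D \<phi>"
    "cleft D \<psi> = vcmp D (cleft D \<phi>) h" "cright D \<psi> = vcmp D (cright D \<phi>) k"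
  shows "\<exists>\<xi>. is_cell D \<xi> (csrc D \<psi>) (csrc D \<phi>) h k \<and> \<phi> \<cdot> \<xi> = \<psi>"
proof -
  have U: "\<And>\<psi> h k. \<psi> \<in> Cel D \<Longrightarrow> h \<in> Ver D \<Longrightarrow> k \<in> Ver D \<Longrightarrow>
       vcod D h = vdom D (cleft D \<phi>) \<Longrightarrow> vcod D k = vdom D (cright D \<phi>) \<Longrightarrow>
       ctgt D \<psi> = ctgt D \<phi> \<Longrightarrow> cleft D \<psi> = vcmp D (cleft D \<phi>) h \<Longrightarrow> cright D \<psi> = vcmp D (cright D \<phi>) k \<Longrightarrow>
       (\<exists>!\<chi>. is_cell D \<chi> (csrc D \<psi>) (csrc D \<phi>) h k \<and> \<phi> \<cdot> \<chi> = \<psi>)"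
    using assms(1) unfolding cartesian_def by blast
  show ?thesis by (rule ex1_implies_ex, rule U) (fact assms)+
qed

lemma cart_uniq:
  assumes "cartesian D \<phi>" "is_cell D \<xi>1 S (csrc D \<phi>) h k" "is_cell D \<xi>2 S (csrc D \<phi>) h k"
    "\<phi> \<cdot> \<xi>1 = \<phi> \<cdot> \<xi>2"
  shows "\<xi>1 = \<xi>2"
proof -
  have p: "\<phi> \<in> Cel D" and U: "\<And>\<psi> h k. \<psi> \<in> Cel D \<Longrightarrow> h \<in> Ver D \<Longrightarrow> k \<in> Ver D \<Longrightarrow>
       vcod D h = vdom D (cleft D \<phi>) \<Longrightarrow> vcod D k = vdom D (cright D \<phi>) \<Longrightarrow>
       ctgt D \<psi> = ctgt D \<phi> \<Longrightarrow> cleft D \<psi> = vcmp D (cleft D \<phi>) h \<Longrightarrow> cright D \<psi> = vcmp D (cright D \<phi>) k \<Longrightarrow>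
       (\<exists>!\<chi>. is_cell D \<chi> (csrc D \<psi>) (csrc D \<phi>) h k \<and> \<phi> \<cdot> \<chi> = \<psi>)"
    using assms(1) unfolding cartesian_def by blast+
  have x: "\<xi>1 \<in> Cel D" "csrc D \<xi>1 = S" "ctgt D \<xi>1 = csrc D \<phi>" "cleft D \<xi>1 = h" "cright D \<xi>1 = k"
    using assms(2) unfolding is_cell_def by auto
  have hk: "h \<in> Ver D" "k \<in> Ver D" "vcod D h = vdom D (cleft D \<phi>)" "vcod D k = vdom D (cright D \<phi>)"
    using cel_bd[OF x(1)] cel_bd[OF p] x by auto
  have e: "\<exists>!\<chi>. is_cell D \<chi> (csrc D (\<phi> \<cdot> \<xi>1)) (csrc D \<phi>) h k \<and> \<phi> \<cdot> \<chi> = \<phi> \<cdot> \<xi>1"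
    apply (rule U) using x p hk by simp_all
  have s: "csrc D (\<phi> \<cdot> \<xi>1) = S" using x p by simp
  from e[unfolded s] obtain c where
    c: "\<And>y. is_cell D y S (csrc D \<phi>) h k \<and> \<phi> \<cdot> y = \<phi> \<cdot> \<xi>1 \<Longrightarrow> y = c"
    unfolding Ex1_def by (elim exE conjE) (rule that, iprover)
  have "\<xi>1 = c" by (rule c) (intro conjI assms(2) refl)
  moreover have "\<xi>2 = c" by (rule c) (intro conjI assms(3) assms(4)[symmetric])
  ultimately show ?thesis by simp
qed


lemma cart_intro:
  assumes "\<phi> \<in> Cel D"
    and ex: "\<And>\<psi> h k. \<psi> \<in> Cel D \<Longrightarrow> h \<in> Ver D \<Longrightarrow> k \<in> Ver D \<Longrightarrow>
       vcod D h = vdom D (cleft D \<phi>) \<Longrightarrow> vcod D k = vdom D (cright D \<phi>) \<Longrightarrow> ctgt D \<psi> = ctgt D \<phi> \<Longrightarrow>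
       cleft D \<psi> = vcmp D (cleft D \<phi>) h \<Longrightarrow> cright D \<psi> = vcmp D (cright D \<phi>) k \<Longrightarrow>
       \<exists>\<xi>. is_cell D \<xi> (csrc D \<psi>) (csrc D \<phi>) h k \<and> \<phi> \<cdot> \<xi> = \<psi>"
    and un: "\<And>\<xi>1 \<xi>2 S h k. is_cell D \<xi>1 S (csrc D \<phi>) h k \<Longrightarrow> is_cell D \<xi>2 S (csrc D \<phi>) h k \<Longrightarrow>
       \<phi> \<cdot> \<xi>1 = \<phi> \<cdot> \<xi>2 \<Longrightarrow> \<xi>1 = \<xi>2"
  shows "cartesian D \<phi>"
  unfolding cartesian_def
proof (intro conjI assms(1) ballI impI)
  fix \<psi> h k assume a: "\<psi> \<in> Cel D" "h \<in> Ver D" "k \<in> Ver D"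
       "vcod D h = vdom D (cleft D \<phi>)" "vcod D k = vdom D (cright D \<phi>)" "ctgt D \<psi> = ctgt D \<phi>"
       "cleft D \<psi> = vcmp D (cleft D \<phi>) h" "cright D \<psi> = vcmp D (cright D \<phi>) k"
  from ex[OF a] obtain \<xi> where x: "is_cell D \<xi> (csrc D \<psi>) (csrc D \<phi>) h k \<and> \<phi> \<cdot> \<xi> = \<psi>" by blast
  show "\<exists>!\<xi>. is_cell D \<xi> (csrc D \<psi>) (csrc D \<phi>) h k \<and> \<phi> \<cdot> \<xi> = \<psi>"
  proof (rule ex1I[of _ \<xi>])
    show "is_cell D \<xi> (csrc D \<psi>) (csrc D \<phi>) h k \<and> \<phi> \<cdot> \<xi> = \<psi>" by (fact x)
    fix y assume y: "is_cell D y (csrc D \<psi>) (csrc D \<phi>) h k \<and> \<phi> \<cdot> y = \<psi>"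
    show "y = \<xi>" apply (rule un[of y "csrc D \<psi>" h k \<xi>]) using x y by simp_all
  qed
qed

lemma iso_cart:
  assumes "cell_invertible D \<omega>" "cleft D \<omega> = vid D (hsrc D (csrc D \<omega>))" "cright D \<omega> = vid D (htgt D (csrc D \<omega>))"
  shows "cartesian D \<omega>"
proof (rule cart_intro)
  note p = inv_cel[OF assms(1)]
  show "\<omega> \<in> Cel D" by (fact p)
  fix \<psi> h k assume a: "\<psi> \<in> Cel D" "h \<in> Ver D" "k \<in> Ver D"
       "vcod D h = vdom D (cleft D \<omega>)" "vcod D k = vdom D (cright D \<omega>)" "ctgt D \<psi> = ctgt D \<omega>"
       "cleft D \<psi> = vcmp D (cleft D \<omega>) h" "cright D \<psi> = vcmp D (cright D \<omega>) k"
  show "\<exists>\<xi>. is_cell D \<xi> (csrc D \<psi>) (csrc D \<omega>) h k \<and> \<omega> \<cdot> \<xi> = \<psi>"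
    apply (rule exI[of _ "cinv D \<omega> \<cdot> \<psi>"])
    using a assms p unfolding is_cell_def by simp
next
  fix \<xi>1 \<xi>2 S h k assume a: "is_cell D \<xi>1 S (csrc D \<omega>) h k" "is_cell D \<xi>2 S (csrc D \<omega>) h k"
    "\<omega> \<cdot> \<xi>1 = \<omega> \<cdot> \<xi>2"
  show "\<xi>1 = \<xi>2" apply (rule mono_cancel[OF assms(1) _ _ _ _ a(3)])
    using a(1,2) unfolding is_cell_def by auto
qed

lemma vc_cart:
  assumes c1: "cartesian D \<phi>" and c2: "cartesian D \<psi>" and m: "ctgt D \<phi> = csrc D \<psi>"
  shows "cartesian D (\<psi> \<cdot> \<phi>)"
proof -
  have p: "\<phi> \<in> Cel D" "\<psi> \<in> Cel D" using c1 c2 unfolding cartesian_def by auto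
  show ?thesis
  proof (rule cart_intro)
    show "\<psi> \<cdot> \<phi> \<in> Cel D" using p m by simp
    fix \<chi> h k assume a: "\<chi> \<in> Cel D" "h \<in> Ver D" "k \<in> Ver D"
       "vcod D h = vdom D (cleft D (\<psi> \<cdot> \<phi>))" "vcod D k = vdom D (cright D (\<psi> \<cdot> \<phi>))" "ctgt D \<chi> = ctgt D (\<psi> \<cdot> \<phi>)"
       "cleft D \<chi> = vcmp D (cleft D (\<psi> \<cdot> \<phi>)) h" "cright D \<chi> = vcmp D (cright D (\<psi> \<cdot> \<phi>)) k"
    have a': "vcod D h = hsrc D (csrc D \<phi>)" "vcod D k = htgt D (csrc D \<phi>)" "ctgt D \<chi> = ctgt D \<psi>"
      "cleft D \<chi> = vcmp D (cleft D \<psi>) (vcmp D (cleft D \<phi>) h)"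
      "cright D \<chi> = vcmp D (cright D \<psi>) (vcmp D (cright D \<phi>) k)"
      using a p m by simp_all
    obtain \<xi>1 where x1: "is_cell D \<xi>1 (csrc D \<chi>) (csrc D \<psi>) (vcmp D (cleft D \<phi>) h) (vcmp D (cright D \<phi>) k)"
        "\<psi> \<cdot> \<xi>1 = \<chi>"
      using cart_ex[OF c2 a(1), of "vcmp D (cleft D \<phi>) h" "vcmp D (cright D \<phi>) k"] a a' p m by auto
    have x1': "\<xi>1 \<in> Cel D" "ctgt D \<xi>1 = ctgt D \<phi>" "cleft D \<xi>1 = vcmp D (cleft D \<phi>) h"
        "cright D \<xi>1 = vcmp D (cright D \<phi>) k" "csrc D \<xi>1 = csrc D \<chi>"
      using x1 m unfolding is_cell_def by auto
    obtain \<xi>2 where x2: "is_cell D \<xi>2 (csrc D \<xi>1) (csrc D \<phi>) h k" "\<phi> \<cdot> \<xi>2 = \<xi>1"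
      using cart_ex[OF c1 x1'(1), of h k] a a' p m x1' by auto
    show "\<exists>\<xi>. is_cell D \<xi> (csrc D \<chi>) (csrc D (\<psi> \<cdot> \<phi>)) h k \<and> (\<psi> \<cdot> \<phi>) \<cdot> \<xi> = \<chi>"
      apply (rule exI[of _ \<xi>2]) using x1 x2 x1' p m unfolding is_cell_def by auto
  next
    fix \<xi>1 \<xi>2 S h k assume a: "is_cell D \<xi>1 S (csrc D (\<psi> \<cdot> \<phi>)) h k" "is_cell D \<xi>2 S (csrc D (\<psi> \<cdot> \<phi>)) h k"
      "(\<psi> \<cdot> \<phi>) \<cdot> \<xi>1 = (\<psi> \<cdot> \<phi>) \<cdot> \<xi>2"
    have a1: "\<xi>1 \<in> Cel D" "csrc D \<xi>1 = S" "ctgt D \<xi>1 = csrc D \<phi>" "cleft D \<xi>1 = h" "cright D \<xi>1 = k"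
      "\<xi>2 \<in> Cel D" "csrc D \<xi>2 = S" "ctgt D \<xi>2 = csrc D \<phi>" "cleft D \<xi>2 = h" "cright D \<xi>2 = k"
      using a p m unfolding is_cell_def by auto
    have "\<psi> \<cdot> (\<phi> \<cdot> \<xi>1) = \<psi> \<cdot> (\<phi> \<cdot> \<xi>2)" using a(3) a1 p m by simp
    hence "\<phi> \<cdot> \<xi>1 = \<phi> \<cdot> \<xi>2"
      by (rule cart_uniq[OF c2, rotated 2]) (use a1 p m in \<open>simp_all add: is_cell_def\<close>)
    thus "\<xi>1 = \<xi>2" by (rule cart_uniq[OF c1, rotated 2]) (use a1 in \<open>simp_all add: is_cell_def\<close>)
  qed
qed

lemma cart_iso:
  assumes c1: "cartesian D c1" and c2: "cartesian D c2"
    and ph: "is_cell D \<Phi> X Y (vid D (hsrc D X)) (vid D (htgt D X))"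
    and sides: "cleft D c1 = cleft D c2" "cright D c1 = cright D c2"
    and eq: "c2 \<cdot> \<Phi> = c1" and cY: "csrc D c2 = Y"
  shows "cell_invertible D \<Phi>"
proof -
  have p: "c1 \<in> Cel D" "c2 \<in> Cel D" using c1 c2 unfolding cartesian_def by auto
  have f: "\<Phi> \<in> Cel D" "csrc D \<Phi> = X" "ctgt D \<Phi> = Y" "cleft D \<Phi> = vid D (hsrc D X)" "cright D \<Phi> = vid D (htgt D X)"
    using ph unfolding is_cell_def by auto
  have XY: "hsrc D X = hsrc D Y" "htgt D X = htgt D Y"
    using f cel_bd[OF f(1)] by (metis vid_simps(2,3) hor_ob)+
  have cs: "csrc D c1 = X" "ctgt D c1 = ctgt D c2"
    using cvcmp_simps(2,3)[OF f(1) p(2)] f cY eq by auto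
  have Y: "Y \<in> Hor D" "X \<in> Hor D" using f cel_bd[OF f(1)] by auto
  have "\<exists>\<xi>. is_cell D \<xi> (csrc D c2) (csrc D c1) (vid D (hsrc D Y)) (vid D (htgt D Y)) \<and> c1 \<cdot> \<xi> = c2"
  proof (rule cart_ex[OF c1 p(2)])
    show "vid D (hsrc D Y) \<in> Ver D" "vid D (htgt D Y) \<in> Ver D" using Y by simp_all
    show "vcod D (vid D (hsrc D Y)) = vdom D (cleft D c1)" using Y cel_bd[OF p(1)] cs XY by simp
    show "vcod D (vid D (htgt D Y)) = vdom D (cright D c1)" using Y cel_bd[OF p(1)] cs XY by simp
    show "ctgt D c2 = ctgt D c1" using cs by simp
    show "cleft D c2 = vcmp D (cleft D c1) (vid D (hsrc D Y))" using Y cel_bd[OF p(1)] cs XY sides by simp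
    show "cright D c2 = vcmp D (cright D c1) (vid D (htgt D Y))" using Y cel_bd[OF p(1)] cs XY sides by simp
  qed
  then obtain \<Psi> where ps: "is_cell D \<Psi> Y X (vid D (hsrc D Y)) (vid D (htgt D Y))" "c1 \<cdot> \<Psi> = c2"
    unfolding cs cY by blast
  have ps': "\<Psi> \<in> Cel D" "csrc D \<Psi> = Y" "ctgt D \<Psi> = X" "cleft D \<Psi> = vid D (hsrc D X)" "cright D \<Psi> = vid D (htgt D X)"
    using ps XY unfolding is_cell_def by auto
  have "c1 \<cdot> (\<Psi> \<cdot> \<Phi>) = (c1 \<cdot> \<Psi>) \<cdot> \<Phi>" using cassoc[of \<Phi> \<Psi> c1] ps' f p cs by simp
  also have "\<dots> = c1 \<cdot> ii X" using ps(2) eq p cs by simp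
  finally have "c1 \<cdot> (\<Psi> \<cdot> \<Phi>) = c1 \<cdot> ii X" .
  hence e1: "\<Psi> \<cdot> \<Phi> = ii X"
    by (rule cart_uniq[OF c1, rotated 2]) (use ps' f Y cs XY in \<open>simp_all add: is_cell_def\<close>)
  have "c2 \<cdot> (\<Phi> \<cdot> \<Psi>) = (c2 \<cdot> \<Phi>) \<cdot> \<Psi>" using cassoc[of \<Psi> \<Phi> c2] ps' f p cY by simp
  also have "\<dots> = c2 \<cdot> ii Y" using ps(2) eq p cY by simp
  finally have "c2 \<cdot> (\<Phi> \<cdot> \<Psi>) = c2 \<cdot> ii Y" .
  hence e2: "\<Phi> \<cdot> \<Psi> = ii Y"
    by (rule cart_uniq[OF c2, rotated 2]) (use ps' f Y cY XY in \<open>simp_all add: is_cell_def\<close>)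
  show ?thesis unfolding cell_invertible_def
    apply (intro conjI f(1) bexI[of _ \<Psi>]) using f ps' e1 e2 by simp_all
qed


end
context dbl begin

definition CD :: "'h \<Rightarrow> 'v \<Rightarrow> 'c \<Rightarrow> 'c \<Rightarrow> bool" where
  "CD M h e \<sigma> \<longleftrightarrow> h \<in> Ver D \<and> M \<in> Hor D \<and> hsrc D M = vdom D h \<and> htgt D M = vcod D h \<and>
     is_cell D \<sigma> M (u1 (vcod D h)) h (vid D (vcod D h)) \<and>
     is_cell D e (u1 (vdom D h)) M (vid D (vdom D h)) h \<and>
     \<sigma> \<cdot> e = cu h \<and> rho M \<cdot> (e \<odot> \<sigma>) = lam M"

lemma CD_D:
  assumes "CD M h e \<sigma>"
  shows "h \<in> Ver D" "M \<in> Hor D" "hsrc D M = vdom D h" "htgt D M = vcod D h"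
    "\<sigma> \<in> Cel D" "csrc D \<sigma> = M" "ctgt D \<sigma> = u1 (vcod D h)" "cleft D \<sigma> = h" "cright D \<sigma> = vid D (vcod D h)"
    "e \<in> Cel D" "csrc D e = u1 (vdom D h)" "ctgt D e = M" "cleft D e = vid D (vdom D h)" "cright D e = h"
    "\<sigma> \<cdot> e = cu h" "rho M \<cdot> (e \<odot> \<sigma>) = lam M"
  using assms unfolding CD_def is_cell_def by auto

lemma restr_cart:
  assumes cd: "CD M h e \<sigma>" and N: "N \<in> Hor D" "hsrc D N = vcod D h"
  shows "cartesian D (lam N \<cdot> (\<sigma> \<odot> ii N))"
proof -
  define A where "A = vdom D h"
  define B where "B = vcod D h"
  note c = CD_D[OF cd, folded A_def B_def]
  have AB: "A \<in> Ob D" "B \<in> Ob D" using c(1) A_def B_def by auto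
  note N' = N(1) N(2)[folded B_def]
  have hAB: "vdom D h = A" "vcod D h = B" using A_def B_def by simp_all
  note ax = c(1-14) AB N' hAB
  define r where "r = lam N \<cdot> (\<sigma> \<odot> ii N)"
  have r: "r \<in> Cel D" "csrc D r = M \<otimes> N" "ctgt D r = N" "cleft D r = h" "cright D r = vid D (htgt D N)"
    unfolding r_def using ax by simp_all
  have C: "e \<odot> r = lam (M \<otimes> N)"
  proof -
    have "e \<odot> \<sigma> = rhoi M \<cdot> (rho M \<cdot> (e \<odot> \<sigma>))" using ax by simp
    hence z: "e \<odot> \<sigma> = rhoi M \<cdot> lam M" unfolding c(16) .
    have i1: "e \<odot> r = (ii M \<odot> lam N) \<cdot> (e \<odot> (\<sigma> \<odot> ii N))"
      unfolding r_def using interchange[of e "ii M" "\<sigma> \<odot> ii N" "lam N"] ax by simp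
    have an: "asc M (u1 B) N \<cdot> ((e \<odot> \<sigma>) \<odot> ii N) = (e \<odot> (\<sigma> \<odot> ii N)) \<cdot> asc (u1 A) M N"
      using assoc_nat[of e \<sigma> "ii N"] ax by simp
    have tr: "(ii M \<odot> lam N) \<cdot> asc M (u1 B) N = rho M \<odot> ii N"
      using triangle[of M N] ax by simp
    have kl: "lam (M \<otimes> N) \<cdot> asc (u1 A) M N = lam M \<odot> ii N"
      using kelly_l[of M N] ax by simp
    have sp: "(rhoi M \<cdot> lam M) \<odot> ii N = (rhoi M \<odot> ii N) \<cdot> (lam M \<odot> ii N)"
      using ax by (intro hsplit_r) simp_all
    have sp2: "(rho M \<odot> ii N) \<cdot> (rhoi M \<odot> ii N) = ii (M \<otimes> N)"
      using hsplit_r[of "rhoi M" "rho M" N, symmetric] ax by simp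
    have "(e \<odot> r) \<cdot> asc (u1 A) M N = (ii M \<odot> lam N) \<cdot> ((e \<odot> (\<sigma> \<odot> ii N)) \<cdot> asc (u1 A) M N)"
      unfolding i1 using ax by simp
    also have "\<dots> = (ii M \<odot> lam N) \<cdot> (asc M (u1 B) N \<cdot> ((e \<odot> \<sigma>) \<odot> ii N))" unfolding an ..
    also have "\<dots> = (rho M \<odot> ii N) \<cdot> ((e \<odot> \<sigma>) \<odot> ii N)"
      using ra[OF tr, of "(e \<odot> \<sigma>) \<odot> ii N"] ax by simp
    also have "\<dots> = (rho M \<odot> ii N) \<cdot> ((rhoi M \<odot> ii N) \<cdot> (lam M \<odot> ii N))" unfolding z sp ..
    also have "\<dots> = lam M \<odot> ii N"
      using ra[OF sp2, of "lam M \<odot> ii N"] ax by simp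
    also have "\<dots> = lam (M \<otimes> N) \<cdot> asc (u1 A) M N" using kl by simp
    finally have "(e \<odot> r) \<cdot> asc (u1 A) M N = lam (M \<otimes> N) \<cdot> asc (u1 A) M N" .
    thus ?thesis
      apply (rule epi_cancel[rotated 5])
      using ax r by simp_all
  qed
  have rep: "\<xi> = ((e \<cdot> cu a) \<odot> (r \<cdot> \<xi>)) \<cdot> lami S" if x: "is_cell D \<xi> S (M \<otimes> N) a k" for \<xi> S a k
  proof -
    have x': "\<xi> \<in> Cel D" "csrc D \<xi> = S" "ctgt D \<xi> = M \<otimes> N" "cleft D \<xi> = a" "cright D \<xi> = k"
      using x unfolding is_cell_def by auto
    have a: "a \<in> Ver D" "vcod D a = A" "vdom D a = hsrc D S" using cel_bd[OF x'(1)] x' ax by auto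
    have S: "S \<in> Hor D" using cel_bd[OF x'(1)] x' by auto
    have ln: "lam (M \<otimes> N) \<cdot> (cu a \<odot> \<xi>) = \<xi> \<cdot> lam S" using lunit_nat[OF x'(1)] x' by simp
    have "((e \<cdot> cu a) \<odot> (r \<cdot> \<xi>)) \<cdot> lami S = ((e \<odot> r) \<cdot> (cu a \<odot> \<xi>)) \<cdot> lami S"
      using interchange[of "cu a" e \<xi> r] ax a x' r by simp
    also have "\<dots> = \<xi> \<cdot> (lam S \<cdot> lami S)" unfolding C using ln ax a x' S by simp
    also have "\<dots> = \<xi>" using x' S by simp
    finally show ?thesis by simp
  qed
  show ?thesis unfolding r_def[symmetric]
  proof (rule cart_intro)
    show "r \<in> Cel D" by (fact r(1))
    fix \<psi> a k assume as: "\<psi> \<in> Cel D" "a \<in> Ver D" "k \<in> Ver D"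
       "vcod D a = vdom D (cleft D r)" "vcod D k = vdom D (cright D r)" "ctgt D \<psi> = ctgt D r"
       "cleft D \<psi> = vcmp D (cleft D r) a" "cright D \<psi> = vcmp D (cright D r) k"
    have as': "vcod D a = A" "vcod D k = htgt D N" "ctgt D \<psi> = N" "cleft D \<psi> = vcmp D h a" "cright D \<psi> = k"
      using as r ax by simp_all
    define X where "X = csrc D \<psi>"
    have X: "X \<in> Hor D" "hsrc D X = vdom D a" "htgt D X = vdom D k"
      using cel_bd[OF as(1)] as' as(1-3) ax X_def by auto
    have Xs: "csrc D \<psi> = X" using X_def by simp
    define \<xi> where "\<xi> = ((e \<cdot> cu a) \<odot> \<psi>) \<cdot> lami X"
    have xt: "is_cell D \<xi> X (M \<otimes> N) a k" unfolding \<xi>_def is_cell_def using as(1-3) as' ax X Xs by simp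
    have s1: "\<sigma> \<cdot> (e \<cdot> cu a) = cu (vcmp D h a)"
    proof -
      have "\<sigma> \<cdot> (e \<cdot> cu a) = (\<sigma> \<cdot> e) \<cdot> cu a" by (rule cassoc[symmetric]) (use as(1-3) as' ax in simp_all)
      also have "\<dots> = cu h \<cdot> cu a" unfolding c(15) ..
      also have "\<dots> = cu (vcmp D h a)" using as(1-3) as' ax by simp
      finally show ?thesis .
    qed
    have sA: "(\<sigma> \<odot> ii N) \<cdot> ((e \<cdot> cu a) \<odot> \<psi>) = cu (vcmp D h a) \<odot> \<psi>"
      using interchange[of "e \<cdot> cu a" \<sigma> \<psi> "ii N"] as(1-3) as' ax unfolding s1 by simp
    have sB: "lam N \<cdot> (cu (vcmp D h a) \<odot> \<psi>) = \<psi> \<cdot> lam X"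
      using lunit_nat[OF as(1)] as' Xs by simp
    have "r \<cdot> \<xi> = lam N \<cdot> ((\<sigma> \<odot> ii N) \<cdot> (((e \<cdot> cu a) \<odot> \<psi>) \<cdot> lami X))"
      unfolding r_def \<xi>_def using as(1-3) as' ax X Xs by simp
    also have "\<dots> = lam N \<cdot> ((cu (vcmp D h a) \<odot> \<psi>) \<cdot> lami X)"
      using ra[OF sA, of "lami X"] as(1-3) as' ax X Xs by simp
    also have "\<dots> = (\<psi> \<cdot> lam X) \<cdot> lami X"
      using ra[OF sB, of "lami X"] as(1-3) as' ax X Xs by simp
    also have "\<dots> = \<psi>" using as(1-3) X Xs by simp
    finally show "\<exists>\<xi>. is_cell D \<xi> (csrc D \<psi>) (csrc D r) a k \<and> r \<cdot> \<xi> = \<psi>"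
      using xt r Xs by auto
  next
    fix \<xi>1 \<xi>2 S a k assume as: "is_cell D \<xi>1 S (csrc D r) a k" "is_cell D \<xi>2 S (csrc D r) a k"
      "r \<cdot> \<xi>1 = r \<cdot> \<xi>2"
    show "\<xi>1 = \<xi>2" using rep[of \<xi>1 S a k] rep[of \<xi>2 S a k] as r by simp
  qed
qed

end
context dbl begin

lemma inv_cinv: "cell_invertible D \<phi> \<Longrightarrow> cell_invertible D (cinv D \<phi>)"
  using inv_basic[of \<phi>] inv_cel[of \<phi>] unfolding cell_invertible_def by (intro conjI bexI[of _ \<phi>]) auto

lemma opcart_ex:
  assumes "opcartesian D \<phi>" "\<psi> \<in> Cel D" "h \<in> Ver D" "k \<in> Ver D"
    "vdom D h = vcod D (cleft D \<phi>)" "vdom D k = vcod D (cright D \<phi>)" "csrc D \<psi> = csrc D \<phi>"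
    "cleft D \<psi> = vcmp D h (cleft D \<phi>)" "cright D \<psi> = vcmp D k (cright D \<phi>)"
  shows "\<exists>\<xi>. is_cell D \<xi> (ctgt D \<phi>) (ctgt D \<psi>) h k \<and> \<xi> \<cdot> \<phi> = \<psi>"
proof -
  have U: "\<And>\<psi> h k. \<psi> \<in> Cel D \<Longrightarrow> h \<in> Ver D \<Longrightarrow> k \<in> Ver D \<Longrightarrow>
       vdom D h = vcod D (cleft D \<phi>) \<Longrightarrow> vdom D k = vcod D (cright D \<phi>) \<Longrightarrow>
       csrc D \<psi> = csrc D \<phi> \<Longrightarrow> cleft D \<psi> = vcmp D h (cleft D \<phi>) \<Longrightarrow> cright D \<psi> = vcmp D k (cright D \<phi>) \<Longrightarrow>
       (\<exists>!\<chi>. is_cell D \<chi> (ctgt D \<phi>) (ctgt D \<psi>) h k \<and> \<chi> \<cdot> \<phi> = \<psi>)"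
    using assms(1) unfolding opcartesian_def by blast
  show ?thesis by (rule ex1_implies_ex, rule U) (fact assms)+
qed

lemma opcart_uniq:
  assumes "opcartesian D \<phi>" "is_cell D \<xi>1 (ctgt D \<phi>) T h k" "is_cell D \<xi>2 (ctgt D \<phi>) T h k"
    "\<xi>1 \<cdot> \<phi> = \<xi>2 \<cdot> \<phi>"
  shows "\<xi>1 = \<xi>2"
proof -
  have p: "\<phi> \<in> Cel D" and U: "\<And>\<psi> h k. \<psi> \<in> Cel D \<Longrightarrow> h \<in> Ver D \<Longrightarrow> k \<in> Ver D \<Longrightarrow>
       vdom D h = vcod D (cleft D \<phi>) \<Longrightarrow> vdom D k = vcod D (cright D \<phi>) \<Longrightarrow>
       csrc D \<psi> = csrc D \<phi> \<Longrightarrow> cleft D \<psi> = vcmp D h (cleft D \<phi>) \<Longrightarrow> cright D \<psi> = vcmp D k (cright D \<phi>) \<Longrightarrow>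
       (\<exists>!\<chi>. is_cell D \<chi> (ctgt D \<phi>) (ctgt D \<psi>) h k \<and> \<chi> \<cdot> \<phi> = \<psi>)"
    using assms(1) unfolding opcartesian_def by blast+
  have x: "\<xi>1 \<in> Cel D" "csrc D \<xi>1 = ctgt D \<phi>" "ctgt D \<xi>1 = T" "cleft D \<xi>1 = h" "cright D \<xi>1 = k"
    using assms(2) unfolding is_cell_def by auto
  have hk: "h \<in> Ver D" "k \<in> Ver D" "vdom D h = vcod D (cleft D \<phi>)" "vdom D k = vcod D (cright D \<phi>)"
    using cel_bd[OF x(1)] cel_bd[OF p] x by auto
  have e: "\<exists>!\<chi>. is_cell D \<chi> (ctgt D \<phi>) (ctgt D (\<xi>1 \<cdot> \<phi>)) h k \<and> \<chi> \<cdot> \<phi> = \<xi>1 \<cdot> \<phi>"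
    apply (rule U) using x p hk by simp_all
  have s: "ctgt D (\<xi>1 \<cdot> \<phi>) = T" using x p by simp
  from e[unfolded s] obtain c where
    c: "\<And>y. is_cell D y (ctgt D \<phi>) T h k \<and> y \<cdot> \<phi> = \<xi>1 \<cdot> \<phi> \<Longrightarrow> y = c"
    unfolding Ex1_def by (elim exE conjE) (rule that, iprover)
  have "\<xi>1 = c" by (rule c) (intro conjI assms(2) refl)
  moreover have "\<xi>2 = c" by (rule c) (intro conjI assms(3) assms(4)[symmetric])
  ultimately show ?thesis by simp
qed

end
context dbl begin

lemma CD_cart:
  assumes cd: "CD M h e \<sigma>"
  shows "cartesian D \<sigma>"
proof -
  define B where "B = vcod D h"
  note c = CD_D[OF cd, folded B_def]
  have B: "B \<in> Ob D" using c(1) B_def by auto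
  have hB: "vcod D h = B" using B_def by simp
  note ax = c(1-14) B hB
  have r1: "cartesian D (lam (u1 B) \<cdot> (\<sigma> \<odot> ii (u1 B)))"
    by (rule restr_cart[OF cd]) (use ax in simp_all)
  have rn: "lam (u1 B) \<cdot> (\<sigma> \<odot> ii (u1 B)) = \<sigma> \<cdot> rho M"
    using runit_nat[of \<sigma>] ax by simp
  have "cartesian D ((\<sigma> \<cdot> rho M) \<cdot> rhoi M)"
    apply (rule vc_cart[OF iso_cart r1[unfolded rn]])
    using ax by (simp_all add: inv_cinv)
  thus ?thesis using ax by simp
qed

lemma opcart_CD:
  assumes co: "companion_opcart D f P \<eta>"
  shows "\<exists>\<theta>. CD P f \<eta> \<theta>"
proof -
  define A where "A = vdom D f"
  define B where "B = vcod D f"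
  have f: "f \<in> Ver D" "P \<in> Hor D" "is_cell D \<eta> (u1 A) P (vid D A) f" "opcartesian D \<eta>"
    using co unfolding companion_opcart_def A_def by auto
  have AB: "A \<in> Ob D" "B \<in> Ob D" "vdom D f = A" "vcod D f = B" using f A_def B_def by auto
  have e: "\<eta> \<in> Cel D" "csrc D \<eta> = u1 A" "ctgt D \<eta> = P" "cleft D \<eta> = vid D A" "cright D \<eta> = f"
    using f(3) unfolding is_cell_def by auto
  have P: "hsrc D P = A" "htgt D P = B" using cel_bd[OF e(1)] e AB by auto
  note ax = f(1,2,4) AB e P
  have "\<exists>\<xi>. is_cell D \<xi> (ctgt D \<eta>) (ctgt D (cu f)) f (vid D B) \<and> \<xi> \<cdot> \<eta> = cu f"
    by (rule opcart_ex[OF f(4)]) (use ax in simp_all)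
  then obtain \<theta> where th: "is_cell D \<theta> P (u1 B) f (vid D B)" "\<theta> \<cdot> \<eta> = cu f"
    using ax by auto
  have t: "\<theta> \<in> Cel D" "csrc D \<theta> = P" "ctgt D \<theta> = u1 B" "cleft D \<theta> = f" "cright D \<theta> = vid D B"
    using th(1) unfolding is_cell_def by auto
  note ax = ax t
  define Z where "Z = rho P \<cdot> ((\<eta> \<odot> \<theta>) \<cdot> lami P)"
  have l1: "lami P \<cdot> \<eta> = (ii (u1 A) \<odot> \<eta>) \<cdot> lami (u1 A)"
  proof -
    have "lam P \<cdot> (ii (u1 A) \<odot> \<eta>) = \<eta> \<cdot> lam (u1 A)" using lunit_nat[OF e(1)] ax by simp
    hence "lami P \<cdot> (lam P \<cdot> (ii (u1 A) \<odot> \<eta>)) \<cdot> lami (u1 A) = lami P \<cdot> (\<eta> \<cdot> lam (u1 A)) \<cdot> lami (u1 A)" by simp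
    thus ?thesis using ax by simp
  qed
  have l2: "(\<eta> \<odot> \<theta>) \<cdot> (ii (u1 A) \<odot> \<eta>) = \<eta> \<odot> cu f"
    using interchange[of "ii (u1 A)" \<eta> \<eta> \<theta>] ax th(2) by simp
  have l3: "rho P \<cdot> (\<eta> \<odot> cu f) = \<eta> \<cdot> lam (u1 A)"
    using runit_nat[OF e(1)] ax by simp
  have "Z \<cdot> \<eta> = rho P \<cdot> ((\<eta> \<odot> \<theta>) \<cdot> ((ii (u1 A) \<odot> \<eta>) \<cdot> lami (u1 A)))"
    unfolding Z_def using ax l1[symmetric] by simp
  also have "\<dots> = rho P \<cdot> ((\<eta> \<odot> cu f) \<cdot> lami (u1 A))" using ra[OF l2, of "lami (u1 A)"] ax by simp
  also have "\<dots> = (\<eta> \<cdot> lam (u1 A)) \<cdot> lami (u1 A)" using ra[OF l3, of "lami (u1 A)"] ax by simp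
  also have "\<dots> = \<eta>" using ax by simp
  finally have Ze: "Z \<cdot> \<eta> = ii P \<cdot> \<eta>" using ax by simp
  have Z1: "Z = ii P"
    by (rule opcart_uniq[OF f(4) _ _ Ze]) (use ax in \<open>simp_all add: Z_def is_cell_def\<close>)
  have "rho P \<cdot> (\<eta> \<odot> \<theta>) = Z \<cdot> lam P" unfolding Z_def using ax by simp
  also have "\<dots> = lam P" unfolding Z1 using ax by simp
  finally have zig: "rho P \<cdot> (\<eta> \<odot> \<theta>) = lam P" .
  show ?thesis
    apply (rule exI[of _ \<theta>]) unfolding CD_def using ax zig th(2) by (simp add: is_cell_def)
qed

end

locale dblT = dbl D for D :: "('o,'v,'h,'c) dblcat" +
  fixes T :: "('o,'v,'h,'c) dfun"
  assumes T: "normal_lax_dfun D T"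
begin

lemma T_simps[simp]:
  "A \<in> Ob D \<Longrightarrow> fo T A \<in> Ob D"
  "f \<in> Ver D \<Longrightarrow> fv T f \<in> Ver D" "f \<in> Ver D \<Longrightarrow> vdom D (fv T f) = fo T (vdom D f)"
  "f \<in> Ver D \<Longrightarrow> vcod D (fv T f) = fo T (vcod D f)"
  "J \<in> Hor D \<Longrightarrow> fh T J \<in> Hor D" "J \<in> Hor D \<Longrightarrow> hsrc D (fh T J) = fo T (hsrc D J)"
  "J \<in> Hor D \<Longrightarrow> htgt D (fh T J) = fo T (htgt D J)"
  "\<phi> \<in> Cel D \<Longrightarrow> fc T \<phi> \<in> Cel D" "\<phi> \<in> Cel D \<Longrightarrow> csrc D (fc T \<phi>) = fh T (csrc D \<phi>)"
  "\<phi> \<in> Cel D \<Longrightarrow> ctgt D (fc T \<phi>) = fh T (ctgt D \<phi>)"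
  "\<phi> \<in> Cel D \<Longrightarrow> cleft D (fc T \<phi>) = fv T (cleft D \<phi>)"
  "\<phi> \<in> Cel D \<Longrightarrow> cright D (fc T \<phi>) = fv T (cright D \<phi>)"
  using T unfolding normal_lax_dfun_def is_cell_def by auto

lemma T_fun[simp]:
  "f \<in> Ver D \<Longrightarrow> g \<in> Ver D \<Longrightarrow> vcod D f = vdom D g \<Longrightarrow> fv T (vcmp D g f) = vcmp D (fv T g) (fv T f)"
  "A \<in> Ob D \<Longrightarrow> fv T (vid D A) = vid D (fo T A)"
  "\<phi> \<in> Cel D \<Longrightarrow> \<psi> \<in> Cel D \<Longrightarrow> ctgt D \<phi> = csrc D \<psi> \<Longrightarrow> fc T (\<psi> \<cdot> \<phi>) = fc T \<psi> \<cdot> fc T \<phi>"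
  "J \<in> Hor D \<Longrightarrow> fc T (ii J) = ii (fh T J)"
  "A \<in> Ob D \<Longrightarrow> fh T (u1 A) = u1 (fo T A)"
  "f \<in> Ver D \<Longrightarrow> fc T (cu f) = cu (fv T f)"
  using T unfolding normal_lax_dfun_def by auto

lemma fcmp_simps[simp]:
  assumes "J \<in> Hor D" "K \<in> Hor D" "htgt D J = hsrc D K"
  shows "fcmp T J K \<in> Cel D" "csrc D (fcmp T J K) = fh T J \<otimes> fh T K" "ctgt D (fcmp T J K) = fh T (J \<otimes> K)"
    "cleft D (fcmp T J K) = vid D (fo T (hsrc D J))" "cright D (fcmp T J K) = vid D (fo T (htgt D K))"
  using T assms unfolding normal_lax_dfun_def is_cell_def by auto

lemma fcmp_nat:
  "\<phi> \<in> Cel D \<Longrightarrow> \<psi> \<in> Cel D \<Longrightarrow> cright D \<phi> = cleft D \<psi> \<Longrightarrow>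
   fc T (\<phi> \<odot> \<psi>) \<cdot> fcmp T (csrc D \<phi>) (csrc D \<psi>) = fcmp T (ctgt D \<phi>) (ctgt D \<psi>) \<cdot> (fc T \<phi> \<odot> fc T \<psi>)"
  using T unfolding normal_lax_dfun_def by metis

lemma fcmp_lunit: "J \<in> Hor D \<Longrightarrow> fc T (lam J) \<cdot> fcmp T (u1 (hsrc D J)) J = lam (fh T J)"
  using T unfolding normal_lax_dfun_def by metis

lemma fcmp_runit: "J \<in> Hor D \<Longrightarrow> fc T (rho J) \<cdot> fcmp T J (u1 (htgt D J)) = rho (fh T J)"
  using T unfolding normal_lax_dfun_def by metis

lemma T_CD:
  assumes cd: "CD M h e \<sigma>"
  shows "CD (fh T M) (fv T h) (fc T e) (fc T \<sigma>)"
proof -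
  define A where "A = vdom D h"
  define B where "B = vcod D h"
  note c = CD_D[OF cd, folded A_def B_def]
  have AB: "A \<in> Ob D" "B \<in> Ob D" "vdom D h = A" "vcod D h = B" using c(1) A_def B_def by auto
  note ax = c(1-14) AB
  have n: "fc T (e \<odot> \<sigma>) \<cdot> fcmp T (u1 A) M = fcmp T M (u1 B) \<cdot> (fc T e \<odot> fc T \<sigma>)"
    using fcmp_nat[of e \<sigma>] ax by simp
  have r: "fc T (rho M) \<cdot> fcmp T M (u1 B) = rho (fh T M)" using fcmp_runit[of M] ax by simp
  have l: "fc T (lam M) \<cdot> fcmp T (u1 A) M = lam (fh T M)" using fcmp_lunit[of M] ax by simp
  have "rho (fh T M) \<cdot> (fc T e \<odot> fc T \<sigma>) = fc T (rho M) \<cdot> (fcmp T M (u1 B) \<cdot> (fc T e \<odot> fc T \<sigma>))"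
    unfolding r[symmetric] using ax by simp
  also have "\<dots> = fc T (rho M) \<cdot> (fc T (e \<odot> \<sigma>) \<cdot> fcmp T (u1 A) M)" unfolding n ..
  also have "\<dots> = fc T (rho M \<cdot> (e \<odot> \<sigma>)) \<cdot> fcmp T (u1 A) M" using ax by simp
  also have "\<dots> = lam (fh T M)" unfolding c(16) l ..
  finally have zig: "rho (fh T M) \<cdot> (fc T e \<odot> fc T \<sigma>) = lam (fh T M)" .
  have se: "fc T \<sigma> \<cdot> fc T e = cu (fv T h)" using c(15) ax
    by (metis T_fun(3,6) cvcmp_simps(1))
  show ?thesis unfolding CD_def is_cell_def using ax zig se by simp
qed

end
context dbl begin

lemma glob_ends:
  assumes "\<phi> \<in> Cel D" "cleft D \<phi> = vid D (hsrc D (csrc D \<phi>))" "cright D \<phi> = vid D (htgt D (csrc D \<phi>))"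
  shows "hsrc D (ctgt D \<phi>) = hsrc D (csrc D \<phi>)" "htgt D (ctgt D \<phi>) = htgt D (csrc D \<phi>)"
  using cel_bd[OF assms(1)] assms by (metis hor_ob vid_simps(3))+

lemma hinv_l[simp]:
  assumes "cell_invertible D \<phi>" "cleft D \<phi> = vid D (hsrc D (csrc D \<phi>))" "cright D \<phi> = vid D (htgt D (csrc D \<phi>))"
    "J \<in> Hor D" "htgt D J = hsrc D (csrc D \<phi>)"
  shows "(ii J \<odot> \<phi>) \<cdot> (ii J \<odot> cinv D \<phi>) = ii (J \<otimes> ctgt D \<phi>)"
    "(ii J \<odot> cinv D \<phi>) \<cdot> (ii J \<odot> \<phi>) = ii (J \<otimes> csrc D \<phi>)"
    "X \<in> Cel D \<Longrightarrow> ctgt D X = J \<otimes> ctgt D \<phi> \<Longrightarrow> (ii J \<odot> \<phi>) \<cdot> ((ii J \<odot> cinv D \<phi>) \<cdot> X) = X"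
    "X \<in> Cel D \<Longrightarrow> ctgt D X = J \<otimes> csrc D \<phi> \<Longrightarrow> (ii J \<odot> cinv D \<phi>) \<cdot> ((ii J \<odot> \<phi>) \<cdot> X) = X"
proof -
  note p = inv_cel[OF assms(1)]
  note ge = glob_ends[OF p assms(2,3)]
  note ax = assms p ge
  show 1: "(ii J \<odot> \<phi>) \<cdot> (ii J \<odot> cinv D \<phi>) = ii (J \<otimes> ctgt D \<phi>)"
    using interchange[of "ii J" "ii J" "cinv D \<phi>" \<phi>, symmetric] ax by simp
  show 2: "(ii J \<odot> cinv D \<phi>) \<cdot> (ii J \<odot> \<phi>) = ii (J \<otimes> csrc D \<phi>)"
    using interchange[of "ii J" "ii J" \<phi> "cinv D \<phi>", symmetric] ax by simp
  show "X \<in> Cel D \<Longrightarrow> ctgt D X = J \<otimes> ctgt D \<phi> \<Longrightarrow> (ii J \<odot> \<phi>) \<cdot> ((ii J \<odot> cinv D \<phi>) \<cdot> X) = X"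
    using ra[OF 1, of X] ax by simp
  show "X \<in> Cel D \<Longrightarrow> ctgt D X = J \<otimes> csrc D \<phi> \<Longrightarrow> (ii J \<odot> cinv D \<phi>) \<cdot> ((ii J \<odot> \<phi>) \<cdot> X) = X"
    using ra[OF 2, of X] ax by simp
qed

lemma hinv_r[simp]:
  assumes "cell_invertible D \<phi>" "cleft D \<phi> = vid D (hsrc D (csrc D \<phi>))" "cright D \<phi> = vid D (htgt D (csrc D \<phi>))"
    "J \<in> Hor D" "hsrc D J = htgt D (csrc D \<phi>)"
  shows "(\<phi> \<odot> ii J) \<cdot> (cinv D \<phi> \<odot> ii J) = ii (ctgt D \<phi> \<otimes> J)"
    "(cinv D \<phi> \<odot> ii J) \<cdot> (\<phi> \<odot> ii J) = ii (csrc D \<phi> \<otimes> J)"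
    "X \<in> Cel D \<Longrightarrow> ctgt D X = ctgt D \<phi> \<otimes> J \<Longrightarrow> (\<phi> \<odot> ii J) \<cdot> ((cinv D \<phi> \<odot> ii J) \<cdot> X) = X"
    "X \<in> Cel D \<Longrightarrow> ctgt D X = csrc D \<phi> \<otimes> J \<Longrightarrow> (cinv D \<phi> \<odot> ii J) \<cdot> ((\<phi> \<odot> ii J) \<cdot> X) = X"
proof -
  note p = inv_cel[OF assms(1)]
  note ge = glob_ends[OF p assms(2,3)]
  note ax = assms p ge
  show 1: "(\<phi> \<odot> ii J) \<cdot> (cinv D \<phi> \<odot> ii J) = ii (ctgt D \<phi> \<otimes> J)"
    using interchange[of "cinv D \<phi>" \<phi> "ii J" "ii J", symmetric] ax by simp
  show 2: "(cinv D \<phi> \<odot> ii J) \<cdot> (\<phi> \<odot> ii J) = ii (csrc D \<phi> \<otimes> J)"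
    using interchange[of \<phi> "cinv D \<phi>" "ii J" "ii J", symmetric] ax by simp
  show "X \<in> Cel D \<Longrightarrow> ctgt D X = ctgt D \<phi> \<otimes> J \<Longrightarrow> (\<phi> \<odot> ii J) \<cdot> ((cinv D \<phi> \<odot> ii J) \<cdot> X) = X"
    using ra[OF 1, of X] ax by simp
  show "X \<in> Cel D \<Longrightarrow> ctgt D X = csrc D \<phi> \<otimes> J \<Longrightarrow> (cinv D \<phi> \<odot> ii J) \<cdot> ((\<phi> \<odot> ii J) \<cdot> X) = X"
    using ra[OF 2, of X] ax by simp
qed

lemma iso_solve_l:
  "cell_invertible D \<omega> \<Longrightarrow> X \<in> Cel D \<Longrightarrow> ctgt D X = csrc D \<omega> \<Longrightarrow> \<omega> \<cdot> X = Y \<Longrightarrow> X = cinv D \<omega> \<cdot> Y"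
  by (metis cinv_cancel(3))

lemma iso_solve_r:
  "cell_invertible D \<omega> \<Longrightarrow> X \<in> Cel D \<Longrightarrow> csrc D X = ctgt D \<omega> \<Longrightarrow> X \<cdot> \<omega> = Y \<Longrightarrow> X = Y \<cdot> cinv D \<omega>"
proof -
  assume a: "cell_invertible D \<omega>" "X \<in> Cel D" "csrc D X = ctgt D \<omega>" "X \<cdot> \<omega> = Y"
  note b = inv_basic[OF a(1)] and p = inv_cel[OF a(1)]
  have "X = X \<cdot> (\<omega> \<cdot> cinv D \<omega>)" using a(1-3) b by simp
  also have "\<dots> = (X \<cdot> \<omega>) \<cdot> cinv D \<omega>" using a(1-3) b p by simp
  finally show ?thesis using a(4) by simp
qed

end
context dbl begin

lemma cinv_cinv[simp]: "cell_invertible D \<phi> \<Longrightarrow> cinv D (cinv D \<phi>) = \<phi>"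
proof -
  assume a: "cell_invertible D \<phi>"
  note b1 = inv_basic[OF a] and b2 = inv_basic[OF inv_cinv[OF a]] and p = inv_cel[OF a]
  have "\<phi> = (cinv D (cinv D \<phi>) \<cdot> cinv D \<phi>) \<cdot> \<phi>" using b1 b2 p by simp
  also have "\<dots> = cinv D (cinv D \<phi>) \<cdot> (cinv D \<phi> \<cdot> \<phi>)" by (rule cassoc) (use b1 b2 p in simp_all)
  also have "\<dots> = cinv D (cinv D \<phi>)" using b1 b2 p by simp
  finally show ?thesis by simp
qed

lemma adj_CD:
  assumes adj: "vadjunction D f g" and cj: "conjoint_cart D g K \<chi>"
  shows "\<exists>e \<sigma>. CD K f e \<sigma>"
proof -
  define A where "A = vdom D f"
  define C where "C = vcod D f"
  obtain u \<epsilon> where fg: "f \<in> Ver D" "g \<in> Ver D" "vdom D f = vcod D g" "vcod D f = vdom D g"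
    and uv: "vcell D u (vid D (vdom D f)) (vcmp D g f)" and ev: "vcell D \<epsilon> (vcmp D f g) (vid D (vcod D f))"
    and T1: "v2comp D (\<epsilon> \<cdot> cu f) (cu f \<cdot> u) = cu f" and T2: "v2comp D (cu g \<cdot> \<epsilon>) (u \<cdot> cu g) = cu g"
    using adj unfolding vadjunction_def by blast
  have ob: "A \<in> Ob D" "C \<in> Ob D" "vdom D f = A" "vcod D f = C" "vdom D g = C" "vcod D g = A"
    using fg A_def C_def by auto
  have ch: "K \<in> Hor D" "\<chi> \<in> Cel D" "csrc D \<chi> = K" "ctgt D \<chi> = u1 A" "cleft D \<chi> = vid D A" "cright D \<chi> = g"
    "cartesian D \<chi>"
    using cj ob unfolding conjoint_cart_def is_cell_def by auto
  have Kh: "hsrc D K = A" "htgt D K = C" using cel_bd[OF ch(2)] ch ob by auto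
  have ut: "u \<in> Cel D" "csrc D u = u1 A" "ctgt D u = u1 A" "cleft D u = vid D A" "cright D u = vcmp D g f"
    using uv ob unfolding vcell_def is_cell_def by auto
  have et: "\<epsilon> \<in> Cel D" "csrc D \<epsilon> = u1 C" "ctgt D \<epsilon> = u1 C" "cleft D \<epsilon> = vcmp D f g" "cright D \<epsilon> = vid D C"
    using ev ob fg unfolding vcell_def is_cell_def by auto
  note ax = fg(1,2) ob ch(1-6) Kh ut et
  have T1': "lam (u1 C) \<cdot> (((cu f \<cdot> u) \<odot> (\<epsilon> \<cdot> cu f)) \<cdot> lami (u1 A)) = cu f"
    using T1 ax unfolding v2comp_def by simp
  have T2': "lam (u1 A) \<cdot> (((u \<cdot> cu g) \<odot> (cu g \<cdot> \<epsilon>)) \<cdot> lami (u1 C)) = cu g"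
    using T2 ax unfolding v2comp_def by simp
  have "\<exists>\<xi>. is_cell D \<xi> (csrc D u) (csrc D \<chi>) (vid D A) f \<and> \<chi> \<cdot> \<xi> = u"
    by (rule cart_ex[OF ch(7) ut(1)]) (use ax in simp_all)
  then obtain e where e: "is_cell D e (u1 A) K (vid D A) f" "\<chi> \<cdot> e = u" using ax by auto
  have et': "e \<in> Cel D" "csrc D e = u1 A" "ctgt D e = K" "cleft D e = vid D A" "cright D e = f"
    using e(1) unfolding is_cell_def by auto
  note ax = ax et'
  define \<sigma> where "\<sigma> = lam (u1 C) \<cdot> (((cu f \<cdot> \<chi>) \<odot> \<epsilon>) \<cdot> rhoi K)"
  have st: "\<sigma> \<in> Cel D" "csrc D \<sigma> = K" "ctgt D \<sigma> = u1 C" "cleft D \<sigma> = f" "cright D \<sigma> = vid D C"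
    unfolding \<sigma>_def using ax by simp_all
  note ax = ax st
  have se: "\<sigma> \<cdot> e = cu f"
  proof -
    have n: "rho K \<cdot> (e \<odot> cu f) = e \<cdot> lam (u1 A)" using runit_nat[OF et'(1)] ax by simp
    have "e \<odot> cu f = rhoi K \<cdot> (e \<cdot> lam (u1 A))" by (rule iso_solve_l[OF _ _ _ n]) (use ax in simp_all)
    hence r1: "(e \<odot> cu f) \<cdot> lami (u1 A) = rhoi K \<cdot> e" using ax by simp
    have i: "((cu f \<cdot> \<chi>) \<odot> \<epsilon>) \<cdot> (e \<odot> cu f) = (cu f \<cdot> u) \<odot> (\<epsilon> \<cdot> cu f)"
      using interchange[of e "cu f \<cdot> \<chi>" "cu f" \<epsilon>] ax e(2) by simp
    have "\<sigma> \<cdot> e = lam (u1 C) \<cdot> (((cu f \<cdot> \<chi>) \<odot> \<epsilon>) \<cdot> (rhoi K \<cdot> e))" unfolding \<sigma>_def using ax by simp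
    also have "\<dots> = lam (u1 C) \<cdot> ((((cu f \<cdot> \<chi>) \<odot> \<epsilon>) \<cdot> (e \<odot> cu f)) \<cdot> lami (u1 A))"
      unfolding r1[symmetric] using ax by simp
    also have "\<dots> = cu f" unfolding i T1' ..
    finally show ?thesis .
  qed
  \<comment> \<open>the zig-zag equation, checked against the cartesian cell chi\<close>
  have Z1: "\<chi> \<cdot> (rho K \<cdot> (e \<odot> \<sigma>)) = lam (u1 A) \<cdot> (u \<odot> (cu g \<cdot> \<sigma>))"
  proof -
    have n: "\<chi> \<cdot> rho K = lam (u1 A) \<cdot> (\<chi> \<odot> cu g)" using runit_nat[OF ch(2)] ax by simp
    have i: "(\<chi> \<odot> cu g) \<cdot> (e \<odot> \<sigma>) = u \<odot> (cu g \<cdot> \<sigma>)"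
      using interchange[of e \<chi> \<sigma> "cu g"] ax e(2) by simp
    have "\<chi> \<cdot> (rho K \<cdot> (e \<odot> \<sigma>)) = (\<chi> \<cdot> rho K) \<cdot> (e \<odot> \<sigma>)" using ax by simp
    also have "\<dots> = lam (u1 A) \<cdot> (u \<odot> (cu g \<cdot> \<sigma>))" unfolding n using i ax by simp
    finally show ?thesis .
  qed
  have Z2: "\<chi> \<cdot> lam K = lam (u1 A) \<cdot> (ii (u1 A) \<odot> \<chi>)" using lunit_nat[OF ch(2)] ax by simp
  have gs: "cu g \<cdot> \<sigma> = lam (u1 A) \<cdot> (((cu (vcmp D g f) \<cdot> \<chi>) \<odot> (cu g \<cdot> \<epsilon>)) \<cdot> rhoi K)"
  proof -
    have n: "cu g \<cdot> lam (u1 C) = lam (u1 A) \<cdot> (cu g \<odot> cu g)" using lunit_nat[of "cu g"] ax by simp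
    have i: "(cu g \<odot> cu g) \<cdot> ((cu f \<cdot> \<chi>) \<odot> \<epsilon>) = (cu (vcmp D g f) \<cdot> \<chi>) \<odot> (cu g \<cdot> \<epsilon>)"
      using interchange[of "cu f \<cdot> \<chi>" "cu g" \<epsilon> "cu g"] ax by simp
    have "cu g \<cdot> \<sigma> = (cu g \<cdot> lam (u1 C)) \<cdot> (((cu f \<cdot> \<chi>) \<odot> \<epsilon>) \<cdot> rhoi K)" unfolding \<sigma>_def using ax by simp
    also have "\<dots> = lam (u1 A) \<cdot> (((cu g \<odot> cu g) \<cdot> ((cu f \<cdot> \<chi>) \<odot> \<epsilon>)) \<cdot> rhoi K)" unfolding n using ax by simp
    also have "\<dots> = lam (u1 A) \<cdot> (((cu (vcmp D g f) \<cdot> \<chi>) \<odot> (cu g \<cdot> \<epsilon>)) \<cdot> rhoi K)" unfolding i ..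
    finally show ?thesis .
  qed
  have E1: "u \<odot> (lam (u1 A) \<cdot> (((cu (vcmp D g f) \<cdot> \<chi>) \<odot> (cu g \<cdot> \<epsilon>)) \<cdot> rhoi K))
     = (ii (u1 A) \<odot> lam (u1 A)) \<cdot> ((u \<odot> ((cu (vcmp D g f) \<cdot> \<chi>) \<odot> (cu g \<cdot> \<epsilon>))) \<cdot> (ii (u1 A) \<odot> rhoi K))"
  proof -
    have a: "u \<odot> (lam (u1 A) \<cdot> (((cu (vcmp D g f) \<cdot> \<chi>) \<odot> (cu g \<cdot> \<epsilon>)) \<cdot> rhoi K))
       = (ii (u1 A) \<odot> lam (u1 A)) \<cdot> (u \<odot> (((cu (vcmp D g f) \<cdot> \<chi>) \<odot> (cu g \<cdot> \<epsilon>)) \<cdot> rhoi K))"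
      using interchange[of u "ii (u1 A)" "((cu (vcmp D g f) \<cdot> \<chi>) \<odot> (cu g \<cdot> \<epsilon>)) \<cdot> rhoi K" "lam (u1 A)"] ax by simp
    have b: "u \<odot> (((cu (vcmp D g f) \<cdot> \<chi>) \<odot> (cu g \<cdot> \<epsilon>)) \<cdot> rhoi K)
       = (u \<odot> ((cu (vcmp D g f) \<cdot> \<chi>) \<odot> (cu g \<cdot> \<epsilon>))) \<cdot> (ii (u1 A) \<odot> rhoi K)"
      using interchange[of "ii (u1 A)" u "rhoi K" "(cu (vcmp D g f) \<cdot> \<chi>) \<odot> (cu g \<cdot> \<epsilon>)"] ax by simp
    show ?thesis unfolding a b ..
  qed
  have E2: "u \<odot> ((cu (vcmp D g f) \<cdot> \<chi>) \<odot> (cu g \<cdot> \<epsilon>))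
     = asc (u1 A) (u1 A) (u1 A) \<cdot> (((u \<odot> (cu (vcmp D g f) \<cdot> \<chi>)) \<odot> (cu g \<cdot> \<epsilon>)) \<cdot> asci (u1 A) K (u1 C))"
  proof -
    have n: "asc (u1 A) (u1 A) (u1 A) \<cdot> ((u \<odot> (cu (vcmp D g f) \<cdot> \<chi>)) \<odot> (cu g \<cdot> \<epsilon>))
        = (u \<odot> ((cu (vcmp D g f) \<cdot> \<chi>) \<odot> (cu g \<cdot> \<epsilon>))) \<cdot> asc (u1 A) K (u1 C)"
      using assoc_nat[of u "cu (vcmp D g f) \<cdot> \<chi>" "cu g \<cdot> \<epsilon>"] ax by simp
    have "u \<odot> ((cu (vcmp D g f) \<cdot> \<chi>) \<odot> (cu g \<cdot> \<epsilon>))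
       = (asc (u1 A) (u1 A) (u1 A) \<cdot> ((u \<odot> (cu (vcmp D g f) \<cdot> \<chi>)) \<odot> (cu g \<cdot> \<epsilon>))) \<cdot> asci (u1 A) K (u1 C)"
      by (rule iso_solve_r[OF _ _ _ n[symmetric]]) (use ax in simp_all)
    thus ?thesis using ax by simp
  qed
  have E3: "u \<odot> (cu (vcmp D g f) \<cdot> \<chi>) = (\<chi> \<odot> (u \<cdot> cu g)) \<cdot> (rhoi K \<cdot> lam K)"
  proof -
    have a: "u \<odot> (cu (vcmp D g f) \<cdot> \<chi>) = (u \<odot> cu (vcmp D g f)) \<cdot> (ii (u1 A) \<odot> \<chi>)"
      using interchange[of "ii (u1 A)" u \<chi> "cu (vcmp D g f)"] ax by simp
    have b1: "lam (u1 A) \<cdot> (u \<odot> cu (vcmp D g f)) = u \<cdot> lam (u1 A)" using runit_nat[OF ut(1)] ax by simp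
    have b: "u \<odot> cu (vcmp D g f) = lami (u1 A) \<cdot> (u \<cdot> lam (u1 A))"
      by (rule iso_solve_l[OF _ _ _ b1]) (use ax in simp_all)
    have c1: "lam (u1 A) \<cdot> (ii (u1 A) \<odot> \<chi>) = \<chi> \<cdot> lam K" using Z2 by simp
    have c: "ii (u1 A) \<odot> \<chi> = lami (u1 A) \<cdot> (\<chi> \<cdot> lam K)"
      by (rule iso_solve_l[OF _ _ _ c1]) (use ax in simp_all)
    have d: "\<chi> \<odot> (u \<cdot> cu g) = (ii (u1 A) \<odot> u) \<cdot> (\<chi> \<odot> cu g)"
      using interchange[of \<chi> "ii (u1 A)" "cu g" u] ax by simp
    have d1: "lam (u1 A) \<cdot> (ii (u1 A) \<odot> u) = u \<cdot> lam (u1 A)" using lunit_nat[OF ut(1)] ax by simp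
    have d2: "ii (u1 A) \<odot> u = lami (u1 A) \<cdot> (u \<cdot> lam (u1 A))"
      by (rule iso_solve_l[OF _ _ _ d1]) (use ax in simp_all)
    have d3: "lam (u1 A) \<cdot> (\<chi> \<odot> cu g) = \<chi> \<cdot> rho K" using runit_nat[OF ch(2)] ax by simp
    have d4: "\<chi> \<odot> cu g = lami (u1 A) \<cdot> (\<chi> \<cdot> rho K)"
      by (rule iso_solve_l[OF _ _ _ d3]) (use ax in simp_all)
    show ?thesis unfolding a b c d d2 d4 using ax by simp
  qed
  have E4: "((\<chi> \<odot> (u \<cdot> cu g)) \<cdot> (rhoi K \<cdot> lam K)) \<odot> (cu g \<cdot> \<epsilon>)
     = ((\<chi> \<odot> (u \<cdot> cu g)) \<odot> (cu g \<cdot> \<epsilon>)) \<cdot> ((rhoi K \<cdot> lam K) \<odot> ii (u1 C))"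
    using interchange[of "rhoi K \<cdot> lam K" "\<chi> \<odot> (u \<cdot> cu g)" "ii (u1 C)" "cu g \<cdot> \<epsilon>"] ax by simp
  have E5: "(\<chi> \<odot> (u \<cdot> cu g)) \<odot> (cu g \<cdot> \<epsilon>)
     = asci (u1 A) (u1 A) (u1 A) \<cdot> ((\<chi> \<odot> ((u \<cdot> cu g) \<odot> (cu g \<cdot> \<epsilon>))) \<cdot> asc K (u1 C) (u1 C))"
  proof -
    have n: "asc (u1 A) (u1 A) (u1 A) \<cdot> ((\<chi> \<odot> (u \<cdot> cu g)) \<odot> (cu g \<cdot> \<epsilon>))
        = (\<chi> \<odot> ((u \<cdot> cu g) \<odot> (cu g \<cdot> \<epsilon>))) \<cdot> asc K (u1 C) (u1 C)"
      using assoc_nat[of \<chi> "u \<cdot> cu g" "cu g \<cdot> \<epsilon>"] ax by simp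
    show ?thesis by (rule iso_solve_l[OF _ _ _ n]) (use ax in simp_all)
  qed
  have E6: "(u \<cdot> cu g) \<odot> (cu g \<cdot> \<epsilon>) = lami (u1 A) \<cdot> (cu g \<cdot> lam (u1 C))"
  proof -
    have "((u \<cdot> cu g) \<odot> (cu g \<cdot> \<epsilon>)) \<cdot> lami (u1 C) = lami (u1 A) \<cdot> cu g"
      by (rule iso_solve_l[OF _ _ _ T2']) (use ax in simp_all)
    hence "(u \<cdot> cu g) \<odot> (cu g \<cdot> \<epsilon>) = (lami (u1 A) \<cdot> cu g) \<cdot> cinv D (lami (u1 C))"
      by (rule iso_solve_r[rotated 3]) (use ax in \<open>simp_all add: inv_cinv\<close>)
    thus ?thesis using ax by (simp add: inv_cinv)
  qed
  have E7: "\<chi> \<odot> (lami (u1 A) \<cdot> (cu g \<cdot> lam (u1 C)))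
      = (ii (u1 A) \<odot> lami (u1 A)) \<cdot> ((\<chi> \<odot> cu g) \<cdot> (ii K \<odot> lam (u1 C)))"
  proof -
    have a: "\<chi> \<odot> (lami (u1 A) \<cdot> (cu g \<cdot> lam (u1 C))) = (ii (u1 A) \<odot> lami (u1 A)) \<cdot> (\<chi> \<odot> (cu g \<cdot> lam (u1 C)))"
      using interchange[of \<chi> "ii (u1 A)" "cu g \<cdot> lam (u1 C)" "lami (u1 A)"] ax by simp
    have b: "\<chi> \<odot> (cu g \<cdot> lam (u1 C)) = (\<chi> \<odot> cu g) \<cdot> (ii K \<odot> lam (u1 C))"
      using interchange[of "ii K" \<chi> "lam (u1 C)" "cu g"] ax by simp
    show ?thesis unfolding a b ..
  qed
  have E8: "\<chi> \<odot> cu g = lami (u1 A) \<cdot> (\<chi> \<cdot> rho K)"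
  proof -
    have d3: "lam (u1 A) \<cdot> (\<chi> \<odot> cu g) = \<chi> \<cdot> rho K" using runit_nat[OF ch(2)] ax by simp
    show ?thesis by (rule iso_solve_l[OF _ _ _ d3]) (use ax in simp_all)
  qed
  have E9: "(rhoi K \<cdot> lam K) \<odot> ii (u1 C) = (rhoi K \<odot> ii (u1 C)) \<cdot> (lam K \<odot> ii (u1 C))"
    using ax by (intro hsplit_r) simp_all
  have M: "lam (u1 A) \<cdot> (u \<odot> (cu g \<cdot> \<sigma>)) = \<chi> \<cdot> (rho K \<cdot> ((ii K \<odot> lam (u1 C)) \<cdot> (asc K (u1 C) (u1 C) \<cdot>
       ((rhoi K \<odot> ii (u1 C)) \<cdot> ((lam K \<odot> ii (u1 C)) \<cdot> (asci (u1 A) K (u1 C) \<cdot> (ii (u1 A) \<odot> rhoi K)))))))"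
    unfolding gs E1 E2 E3 E4 E5 E6 E7 E8 E9 using ax by simp
  have Tr: "(ii K \<odot> lam (u1 C)) \<cdot> asc K (u1 C) (u1 C) = rho K \<odot> ii (u1 C)"
    using triangle[of K "u1 C"] ax by simp
  have R: "rho K \<cdot> (lam K \<odot> ii (u1 C)) = lam K \<cdot> rho (u1 A \<otimes> K)"
    using runit_nat[of "lam K"] ax by simp
  have KR: "(ii (u1 A) \<odot> rho K) \<cdot> asc (u1 A) K (u1 C) = rho (u1 A \<otimes> K)"
    using kelly_r[of "u1 A" K] ax by simp
  have "lam (u1 A) \<cdot> (u \<odot> (cu g \<cdot> \<sigma>)) = \<chi> \<cdot> (rho K \<cdot> ((rho K \<odot> ii (u1 C)) \<cdot>
       ((rhoi K \<odot> ii (u1 C)) \<cdot> ((lam K \<odot> ii (u1 C)) \<cdot> (asci (u1 A) K (u1 C) \<cdot> (ii (u1 A) \<odot> rhoi K))))))"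
    unfolding M using ra[OF Tr, of "(rhoi K \<odot> ii (u1 C)) \<cdot> ((lam K \<odot> ii (u1 C)) \<cdot> (asci (u1 A) K (u1 C) \<cdot> (ii (u1 A) \<odot> rhoi K)))"] ax
    by simp
  also have "\<dots> = \<chi> \<cdot> ((rho K \<cdot> (lam K \<odot> ii (u1 C))) \<cdot> (asci (u1 A) K (u1 C) \<cdot> (ii (u1 A) \<odot> rhoi K)))"
    using ax by simp
  also have "\<dots> = \<chi> \<cdot> (lam K \<cdot> (rho (u1 A \<otimes> K) \<cdot> (asci (u1 A) K (u1 C) \<cdot> (ii (u1 A) \<odot> rhoi K))))"
    unfolding R using ax by simp
  also have "\<dots> = \<chi> \<cdot> lam K"
    unfolding KR[symmetric] using ax by simp
  finally have Z3: "lam (u1 A) \<cdot> (u \<odot> (cu g \<cdot> \<sigma>)) = \<chi> \<cdot> lam K" .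
  have zig: "rho K \<cdot> (e \<odot> \<sigma>) = lam K"
    by (rule cart_uniq[OF ch(7), of _ "u1 A \<otimes> K" "vid D A" "vid D C"])
       (use ax Z1 Z3 in \<open>simp_all add: is_cell_def\<close>)
  show ?thesis
    apply (rule exI[of _ e], rule exI[of _ \<sigma>]) unfolding CD_def is_cell_def using ax se zig by simp
qed

end
context dblT begin

lemma main_BC:
  assumes it: "double_transformation D (dfun_id D) T \<iota>"
    and adj: "vadjunction D f g" and cj: "conjoint_cart D g K \<chi>"
    and cP: "companion_opcart D (tob \<iota> (hsrc D K)) P \<eta>"
    and cQ: "companion_cart D (tob \<iota> (htgt D K)) Q \<theta>"
  shows "cell_invertible D (iota_star D T \<iota> K P \<eta> Q \<theta>)"
proof -
  define A where "A = hsrc D K"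
  define C where "C = htgt D K"
  have fg: "f \<in> Ver D" "g \<in> Ver D" "vdom D f = vcod D g" "vcod D f = vdom D g"
    using adj unfolding vadjunction_def by auto
  have ch: "K \<in> Hor D" "\<chi> \<in> Cel D" "csrc D \<chi> = K" "ctgt D \<chi> = u1 (vcod D g)" "cleft D \<chi> = vid D (vcod D g)"
     "cright D \<chi> = g"
    using cj unfolding conjoint_cart_def is_cell_def by auto
  have AC: "vcod D g = A" "vdom D g = C" "A \<in> Ob D" "C \<in> Ob D" "hsrc D K = A" "htgt D K = C"
    using cel_bd[OF ch(2)] ch fg A_def C_def by auto
  have fAC: "vdom D f = A" "vcod D f = C" using fg AC by auto
  have itob: "\<And>X. X \<in> Ob D \<Longrightarrow> tob \<iota> X \<in> Ver D \<and> vdom D (tob \<iota> X) = X \<and> vcod D (tob \<iota> X) = fo T X"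
    using it unfolding double_transformation_def dfun_id_def by simp
  have ithor: "\<And>J. J \<in> Hor D \<Longrightarrow> is_cell D (thor \<iota> J) J (fh T J) (tob \<iota> (hsrc D J)) (tob \<iota> (htgt D J))"
    using it unfolding double_transformation_def dfun_id_def by simp
  have ivnat: "\<And>h. h \<in> Ver D \<Longrightarrow> vcmp D (fv T h) (tob \<iota> (vdom D h)) = vcmp D (tob \<iota> (vcod D h)) h"
    using it unfolding double_transformation_def dfun_id_def by simp
  have icnat: "\<And>\<phi>. \<phi> \<in> Cel D \<Longrightarrow> thor \<iota> (ctgt D \<phi>) \<cdot> \<phi> = fc T \<phi> \<cdot> thor \<iota> (csrc D \<phi>)"
    using it unfolding double_transformation_def dfun_id_def by simp
  have iunit: "\<And>X. X \<in> Ob D \<Longrightarrow> thor \<iota> (u1 X) = cu (tob \<iota> X)"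
    using it unfolding double_transformation_def dfun_id_def by simp
  define iA where "iA = tob \<iota> A"
  define iC where "iC = tob \<iota> C"
  have iAC: "iA \<in> Ver D" "vdom D iA = A" "vcod D iA = fo T A" "iC \<in> Ver D" "vdom D iC = C" "vcod D iC = fo T C"
    using itob[of A] itob[of C] AC iA_def iC_def by auto
  define iK where "iK = thor \<iota> K"
  have iK: "iK \<in> Cel D" "csrc D iK = K" "ctgt D iK = fh T K" "cleft D iK = iA" "cright D iK = iC"
    using ithor[OF ch(1)] AC unfolding iK_def iA_def iC_def is_cell_def by auto
  have nat_f: "vcmp D (fv T f) iA = vcmp D iC f" using ivnat[OF fg(1)] fAC iA_def iC_def by simp
  obtain e \<sigma> where cdK: "CD K f e \<sigma>" using adj_CD[OF adj cj] by blast
  have ck: "CD K f e \<sigma>" by (fact cdK)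
  note sK = CD_D[OF cdK, unfolded fAC]
  have cP': "companion_opcart D iA P \<eta>" using cP AC iA_def by simp
  obtain \<theta>A where cdP: "CD P iA \<eta> \<theta>A" using opcart_CD[OF cP'] by blast
  note sP = CD_D[OF cdP, unfolded iAC(2,3)]
  have cdT: "CD (fh T K) (fv T f) (fc T e) (fc T \<sigma>)" by (rule T_CD[OF cdK])
  have qt: "Q \<in> Hor D" "\<theta> \<in> Cel D" "csrc D \<theta> = Q" "ctgt D \<theta> = u1 (fo T C)" "cleft D \<theta> = iC"
      "cright D \<theta> = vid D (fo T C)" "cartesian D \<theta>"
    using cQ AC iAC unfolding companion_cart_def is_cell_def iC_def by auto
  have qh: "hsrc D Q = C" "htgt D Q = fo T C" using cel_bd[OF qt(2)] qt iAC by auto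
  have TO: "fo T A \<in> Ob D" "fo T C \<in> Ob D" using AC by auto
  note ax = fg(1,2) AC fAC iAC iK sK(1-14) sP(1-14) qt(1-6) qh TO
  define c1 where "c1 = \<theta> \<cdot> (lam Q \<cdot> (\<sigma> \<odot> ii Q))"
  define c2 where "c2 = fc T \<sigma> \<cdot> (lam (fh T K) \<cdot> (\<theta>A \<odot> ii (fh T K)))"
  have car1: "cartesian D c1" unfolding c1_def
    by (rule vc_cart[OF restr_cart[OF cdK] qt(7)]) (use ax in simp_all)
  have car2: "cartesian D c2" unfolding c2_def
    by (rule vc_cart[OF restr_cart[OF cdP] CD_cart[OF cdT]]) (use ax in simp_all)
  define \<Phi> where "\<Phi> = iota_star D T \<iota> K P \<eta> Q \<theta>"
  have Phi: "\<Phi> = rho (P \<otimes> fh T K) \<cdot> (((\<eta> \<odot> iK) \<odot> \<theta>) \<cdot> (lami K \<odot> ii Q))"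
    unfolding \<Phi>_def iota_star_def iK_def ..
  have Pt: "is_cell D \<Phi> (K \<otimes> Q) (P \<otimes> fh T K) (vid D (hsrc D (K \<otimes> Q))) (vid D (htgt D (K \<otimes> Q)))"
    unfolding Phi is_cell_def using ax by simp
  have eq: "c2 \<cdot> \<Phi> = c1"
  proof -
    define Tk where "Tk = fh T K"
    define one where "one = u1 (fo T C)"
    define Y where "Y = cu iC \<cdot> \<sigma>"
    have Yt: "Y \<in> Cel D" "csrc D Y = K" "ctgt D Y = one" "cleft D Y = vcmp D iC f" "cright D Y = iC"
      unfolding Y_def one_def using ax by simp_all
    note ax = ax Yt
    have S1: "(\<theta>A \<odot> ii Tk) \<cdot> rho (P \<otimes> Tk) = rho (u1 (fo T A) \<otimes> Tk) \<cdot> ((\<theta>A \<odot> ii Tk) \<odot> ii one)"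
      using runit_nat[of "\<theta>A \<odot> ii Tk"] ax unfolding Tk_def one_def by simp
    have S2: "((\<theta>A \<odot> ii Tk) \<odot> ii one) \<cdot> ((\<eta> \<odot> iK) \<odot> \<theta>) = (cu iA \<odot> iK) \<odot> \<theta>"
    proof -
      have a: "(\<theta>A \<odot> ii Tk) \<cdot> (\<eta> \<odot> iK) = cu iA \<odot> iK"
        using interchange[of \<eta> \<theta>A iK "ii Tk"] ax sP(15) unfolding Tk_def by simp
      show ?thesis using interchange[of "\<eta> \<odot> iK" "\<theta>A \<odot> ii Tk" \<theta> "ii one"] ax a unfolding Tk_def one_def by simp
    qed
    have S3: "fc T \<sigma> \<cdot> lam Tk = lam one \<cdot> (cu (fv T f) \<odot> fc T \<sigma>)"
      using lunit_nat[of "fc T \<sigma>"] ax unfolding Tk_def one_def by simp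
    have S4: "(cu (fv T f) \<odot> fc T \<sigma>) \<cdot> rho (u1 (fo T A) \<otimes> Tk) = rho (one \<otimes> one) \<cdot> ((cu (fv T f) \<odot> fc T \<sigma>) \<odot> ii one)"
      using runit_nat[of "cu (fv T f) \<odot> fc T \<sigma>"] ax unfolding Tk_def one_def by simp
    have S5: "((cu (fv T f) \<odot> fc T \<sigma>) \<odot> ii one) \<cdot> ((cu iA \<odot> iK) \<odot> \<theta>) = (cu (vcmp D iC f) \<odot> Y) \<odot> \<theta>"
    proof -
      have n: "cu iC \<cdot> \<sigma> = fc T \<sigma> \<cdot> iK" using icnat[of \<sigma>] iunit[of C] ax unfolding iK_def iC_def by simp
      have a: "(cu (fv T f) \<odot> fc T \<sigma>) \<cdot> (cu iA \<odot> iK) = cu (vcmp D iC f) \<odot> Y"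
        using interchange[of "cu iA" "cu (fv T f)" iK "fc T \<sigma>"] ax n nat_f unfolding Y_def by simp
      show ?thesis using interchange[of "cu iA \<odot> iK" "cu (fv T f) \<odot> fc T \<sigma>" \<theta> "ii one"] ax a
        unfolding one_def by simp
    qed
    have S6: "cu (vcmp D iC f) \<odot> Y = lami one \<cdot> (Y \<cdot> lam K)"
    proof -
      have "lam one \<cdot> (cu (vcmp D iC f) \<odot> Y) = Y \<cdot> lam K" using lunit_nat[of Y] ax by simp
      thus ?thesis by (rule iso_solve_l[rotated 3]) (use ax in \<open>simp_all add: one_def\<close>)
    qed
    have S7: "((lami one \<cdot> (Y \<cdot> lam K)) \<odot> \<theta>) \<cdot> (lami K \<odot> ii Q) = (lami one \<cdot> Y) \<odot> \<theta>"
      using interchange[of "lami K" "lami one \<cdot> (Y \<cdot> lam K)" "ii Q" \<theta>] ax unfolding one_def by simp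
    have S8: "(lami one \<cdot> Y) \<odot> \<theta> = (lami one \<odot> ii one) \<cdot> (Y \<odot> \<theta>)"
      using interchange[of Y "lami one" \<theta> "ii one"] ax unfolding one_def by simp
    have S9: "rho (one \<otimes> one) \<cdot> (lami one \<odot> ii one) = lami one \<cdot> lam one"
      using runit_nat[of "lami one"] ax unfolding one_def by simp
    have "c2 \<cdot> \<Phi> = fc T \<sigma> \<cdot> (lam Tk \<cdot> ((\<theta>A \<odot> ii Tk) \<cdot> (rho (P \<otimes> Tk) \<cdot> (((\<eta> \<odot> iK) \<odot> \<theta>) \<cdot> (lami K \<odot> ii Q)))))"
      unfolding c2_def Phi Tk_def using ax by simp
    also have "\<dots> = fc T \<sigma> \<cdot> (lam Tk \<cdot> (rho (u1 (fo T A) \<otimes> Tk) \<cdot> (((\<theta>A \<odot> ii Tk) \<odot> ii one) \<cdot> (((\<eta> \<odot> iK) \<odot> \<theta>) \<cdot> (lami K \<odot> ii Q)))))"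
      using ra[OF S1, of "((\<eta> \<odot> iK) \<odot> \<theta>) \<cdot> (lami K \<odot> ii Q)"] ax unfolding Tk_def one_def by simp
    also have "\<dots> = fc T \<sigma> \<cdot> (lam Tk \<cdot> (rho (u1 (fo T A) \<otimes> Tk) \<cdot> (((cu iA \<odot> iK) \<odot> \<theta>) \<cdot> (lami K \<odot> ii Q))))"
      using ra[OF S2, of "lami K \<odot> ii Q"] ax unfolding Tk_def one_def by simp
    also have "\<dots> = lam one \<cdot> ((cu (fv T f) \<odot> fc T \<sigma>) \<cdot> (rho (u1 (fo T A) \<otimes> Tk) \<cdot> (((cu iA \<odot> iK) \<odot> \<theta>) \<cdot> (lami K \<odot> ii Q))))"
      using ra[OF S3, of "rho (u1 (fo T A) \<otimes> Tk) \<cdot> (((cu iA \<odot> iK) \<odot> \<theta>) \<cdot> (lami K \<odot> ii Q))"] ax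
      unfolding Tk_def one_def by simp
    also have "\<dots> = lam one \<cdot> (rho (one \<otimes> one) \<cdot> (((cu (fv T f) \<odot> fc T \<sigma>) \<odot> ii one) \<cdot> (((cu iA \<odot> iK) \<odot> \<theta>) \<cdot> (lami K \<odot> ii Q))))"
      using ra[OF S4, of "((cu iA \<odot> iK) \<odot> \<theta>) \<cdot> (lami K \<odot> ii Q)"] ax unfolding Tk_def one_def by simp
    also have "\<dots> = lam one \<cdot> (rho (one \<otimes> one) \<cdot> (((cu (vcmp D iC f) \<odot> Y) \<odot> \<theta>) \<cdot> (lami K \<odot> ii Q)))"
      using ra[OF S5, of "lami K \<odot> ii Q"] ax unfolding Tk_def one_def by simp
    also have "\<dots> = lam one \<cdot> (rho (one \<otimes> one) \<cdot> ((lami one \<odot> ii one) \<cdot> (Y \<odot> \<theta>)))"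
      unfolding S6 S7 S8 ..
    also have "\<dots> = lam one \<cdot> (Y \<odot> \<theta>)"
      using ra[OF S9, of "Y \<odot> \<theta>"] ax unfolding one_def by simp
    also have "\<dots> = c1"
    proof -
      have n: "\<theta> \<cdot> lam Q = lam one \<cdot> (cu iC \<odot> \<theta>)" using lunit_nat[of \<theta>] ax unfolding one_def by simp
      have i: "(cu iC \<odot> \<theta>) \<cdot> (\<sigma> \<odot> ii Q) = Y \<odot> \<theta>"
        using interchange[of \<sigma> "cu iC" "ii Q" \<theta>] ax unfolding Y_def by simp
      show ?thesis unfolding c1_def using ra[OF n, of "\<sigma> \<odot> ii Q"] i ax unfolding one_def by simp
    qed
    finally show ?thesis .
  qed
  show ?thesis unfolding \<Phi>_def[symmetric]
    by (rule cart_iso[OF car1 car2 Pt _ _ eq]) (use ax nat_f in \<open>simp_all add: c1_def c2_def\<close>)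
qed

end

theorem corollary5p7:
  fixes D :: "('o,'v,'h,'c) dblcat"
    and T :: "('o,'v,'h,'c) dfun"
    and \<mu> \<iota> :: "('o,'v,'h,'c) dtrans"
    and g :: 'v and K :: 'h and \<chi> :: 'c
  assumes "equipment D"
    and "normal_lax_double_monad D T \<mu> \<iota>"
    and "g \<in> Ver D"
    and "has_left_adjoint D g"
    and "conjoint_cart D g K \<chi>"
  shows "right_BC D T \<iota> K"
proof -
  have dc: "double_category D" and nl: "normal_lax_dfun D T"
    and it: "double_transformation D (dfun_id D) T \<iota>"
    using assms(2) unfolding normal_lax_double_monad_def by auto
  interpret dblT D T using dc nl by (simp add: dblT_def dbl_def dblT_axioms_def)
  obtain f where adj: "vadjunction D f g" using assms(4) unfolding has_left_adjoint_def by blast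
  show ?thesis unfolding right_BC_def using main_BC[OF it adj assms(5)] by blast
qed

end
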